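(* Let $Y^s$ and $Y^d$ be positive random variables, let $n_\mu$ denote the law of $Y^s$, and let $(C_i)_{i\ge 1}$ be i.i.d. copies of a random variable $C$ with $\mathbb{P}(C>0)=1$. Assume that $Y^s$, $Y^d$ and $(C_i)_{i\ge1}$ are mutually independent and that $\mathbb{E}[(Y^s)^2]+\mathbb{E}[C^2]<\infty$. Set $D_0=0$, $D_n=C_1+\dots+C_n$, $\overline{B}(t)=\inf\{n\ge 1: D_n\ge t\}=1+\sum_{n\ge1}\mathbf{1}_{D_n<t}$, $K^r=\overline{B}(Y^s)$, $V^s=D_{K^r}$, $Z^d=Y^s+Y^d$, $X^r=\min(V^s,Z^d)$ and $P_d=\mathbb{P}(V^s\ge Z^d)$. Let $R_s(x)=\mathbb{P}(Y^s>x)$, $R_d(x)=\mathbb{P}(Y^d>x)$ and $L(s)=\mathbb{E}[e^{-sC}]$ for $s\ge0$. Then $$\mathbb{E}[K^r]=\sum_{n\ge0}\mathbb{E}[R_s(D_n)],\qquad 1-P_d=\int_0^{\infty}\mathbb{E}\big[R_d(D_{\overline{B}(t)}-t)\big]\,n_\mu(dt),$$ $$\mathbb{E}[X^r]=\mathbb{E}[Y^s]+\int_0^\infty\int_0^\infty \mathbb{P}\big(D_{\overline{B}(t)}-t>y\big)R_d(y)\,dy\,n_\mu(dt).$$ If in addition $Y^d$ follows the exponential law with parameter $\lambda>0$, then $$1-P_d=(1-L(\lambda))\sum_{k\ge1}\mathbb{E}\Big[e^{-\lambda D_k}\int_{[0,D_k]}e^{\lambda t}\,n_\mu(dt)\Big]-L(\lambda)\,n_\mu(\{0\}),\qquad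 \mathbb{E}[X^r]=\mathbb{E}[Y^s]+\frac{1}{\lambda}P_d .$$
   Context: Model of a deteriorating system with condition-based maintenance: $Y^s$ is the time from repair to damage, $Y^d$ the time from damage to failure, $C_i$ the time between the $(i-1)$-th and $i$-th inspections, so $D_n$ is the age of the system at the $n$-th inspection; $K^r$ is the index of the first inspection at or after the damage, and the system is renewed at time $X^r$ (at detection of the damage, or at failure if it occurs first). *)

theory Defs
  imports "HOL-Probability.Probability"
begin

text \<open>Index type for the independent family (Y^s, Y^d, C_1, C_2, ...).\<close>
datatype idx = IYs | IYd | IC nat

definition famRV :: "('a \<Rightarrow> real) \<Rightarrow> ('a \<Rightarrow> real) \<Rightarrow> (nat \<Rightarrow> 'a \<Rightarrow> real) \<Rightarrow> idx \<Rightarrow> 'a \<Rightarrow> real" where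
  "famRV Ys Yd C i = (case i of IYs \<Rightarrow> Ys | IYd \<Rightarrow> Yd | IC n \<Rightarrow> C n)"

definition Dsum :: "(nat \<Rightarrow> 'a \<Rightarrow> real) \<Rightarrow> nat \<Rightarrow> 'a \<Rightarrow> real" where
  "Dsum C n \<omega> = (\<Sum>i\<in>{1..n}. C i \<omega>)"

definition Bbar :: "(nat \<Rightarrow> 'a \<Rightarrow> real) \<Rightarrow> real \<Rightarrow> 'a \<Rightarrow> nat" where
  "Bbar C t \<omega> = (LEAST n. 1 \<le> n \<and> t \<le> Dsum C n \<omega>)"

definition Kr :: "(nat \<Rightarrow> 'a \<Rightarrow> real) \<Rightarrow> ('a \<Rightarrow> real) \<Rightarrow> 'a \<Rightarrow> nat" where
  "Kr C Ys \<omega> = Bbar C (Ys \<omega>) \<omega>"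

definition Vs :: "(nat \<Rightarrow> 'a \<Rightarrow> real) \<Rightarrow> ('a \<Rightarrow> real) \<Rightarrow> 'a \<Rightarrow> real" where
  "Vs C Ys \<omega> = Dsum C (Kr C Ys \<omega>) \<omega>"

definition Zd :: "('a \<Rightarrow> real) \<Rightarrow> ('a \<Rightarrow> real) \<Rightarrow> 'a \<Rightarrow> real" where
  "Zd Ys Yd \<omega> = Ys \<omega> + Yd \<omega>"

definition Xr :: "(nat \<Rightarrow> 'a \<Rightarrow> real) \<Rightarrow> ('a \<Rightarrow> real) \<Rightarrow> ('a \<Rightarrow> real) \<Rightarrow> 'a \<Rightarrow> real" where
  "Xr C Ys Yd \<omega> = min (Vs C Ys \<omega>) (Zd Ys Yd \<omega>)"

definition Pd :: "'a measure \<Rightarrow> (nat \<Rightarrow> 'a \<Rightarrow> real) \<Rightarrow> ('a \<Rightarrow> real) \<Rightarrow> ('a \<Rightarrow> real) \<Rightarrow> real" where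
  "Pd M C Ys Yd = measure M {\<omega>\<in>space M. Zd Ys Yd \<omega> \<le> Vs C Ys \<omega>}"

definition surv :: "'a measure \<Rightarrow> ('a \<Rightarrow> real) \<Rightarrow> real \<Rightarrow> real" where
  "surv M X x = measure M {\<omega>\<in>space M. x < X \<omega>}"

definition Lap :: "'a measure \<Rightarrow> ('a \<Rightarrow> real) \<Rightarrow> real \<Rightarrow> real" where
  "Lap M C0 s = (\<integral>\<omega>. exp (- s * C0 \<omega>) \<partial>M)"

end

theory Submission
  imports Defs
begin


definition Dp :: "(idx \<Rightarrow> real) \<Rightarrow> nat \<Rightarrow> real" where
  "Dp c n = (\<Sum>i\<in>{1..n}. c (IC i))"

definition Bp :: "real \<Rightarrow> (idx \<Rightarrow> real) \<Rightarrow> nat" where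
  "Bp t c = (LEAST n. 1 \<le> n \<and> t \<le> Dp c n)"

definition Fp :: "real \<Rightarrow> (idx \<Rightarrow> real) \<Rightarrow> real" where
  "Fp t c = Dp c (Bp t c) - t"

definition IB :: "idx set" where "IB = {IC i | i. 1 \<le> i}"

lemma IC_in_IB[simp]: "IC i \<in> IB \<longleftrightarrow> 1 \<le> i"
  by (auto simp: IB_def)

lemma meas_comp_IC:
  assumes "\<And>i. 1 \<le> i \<Longrightarrow> IC i \<in> K"
  shows "1 \<le> i \<Longrightarrow> (\<lambda>c. c (IC i)) \<in> borel_measurable (PiM K (\<lambda>_. borel))"
  using assms by (intro measurable_component_singleton) auto

lemma meas_Dp:
  assumes "\<And>i. 1 \<le> i \<Longrightarrow> IC i \<in> K"
  shows "(\<lambda>c. Dp c n) \<in> borel_measurable (PiM K (\<lambda>_. borel))"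
  unfolding Dp_def
  by (intro borel_measurable_sum meas_comp_IC[OF assms]) auto

lemma meas_Dp_IB[measurable]: "(\<lambda>c. Dp c n) \<in> borel_measurable (PiM IB (\<lambda>_. borel))"
  by (rule meas_Dp) simp

lemma meas_Bp[measurable]:
  "(\<lambda>(t,c). Bp t c) \<in> measurable (borel \<Otimes>\<^sub>M PiM IB (\<lambda>_. borel)) (count_space UNIV)"
  unfolding Bp_def by measurable

lemma meas_Dp_Bp[measurable]:
  "(\<lambda>(t,c). Dp c (Bp t c)) \<in> borel_measurable (borel \<Otimes>\<^sub>M PiM IB (\<lambda>_. borel))"
proof -
  have "(\<lambda>x. (\<lambda>n x. Dp (snd x) n) ((\<lambda>(t,c). Bp t c) x) x) \<in> borel_measurable (borel \<Otimes>\<^sub>M PiM IB (\<lambda>_. borel))"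
    by (rule measurable_compose_countable[OF _ meas_Bp]) measurable
  then show ?thesis by (simp add: case_prod_beta)
qed

lemma meas_Fp[measurable]:
  "(\<lambda>(t,c). Fp t c) \<in> borel_measurable (borel \<Otimes>\<^sub>M PiM IB (\<lambda>_. borel))"
  unfolding Fp_def using meas_Dp_Bp by (simp add: case_prod_beta) measurable


lemma (in prob_space) cond_nn:
  assumes ind: "indep_var S X T Y"
    and h[measurable]: "(\<lambda>(x,y). h x y) \<in> borel_measurable (S \<Otimes>\<^sub>M T)"
  shows "(\<integral>\<^sup>+\<omega>. h (X \<omega>) (Y \<omega>) \<partial>M) = (\<integral>\<^sup>+x. (\<integral>\<^sup>+\<omega>. h x (Y \<omega>) \<partial>M) \<partial>distr M S X)"
proof -
  have rv[measurable]: "X \<in> measurable M S" "Y \<in> measurable M T"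
    using indep_var_rv1[OF ind] indep_var_rv2[OF ind] by auto
  interpret PX: prob_space "distr M S X" by (rule prob_space_distr) (rule rv)
  interpret PY: prob_space "distr M T Y" by (rule prob_space_distr) (rule rv)
  interpret XY: pair_prob_space "distr M S X" "distr M T Y" ..
  have eq: "distr M S X \<Otimes>\<^sub>M distr M T Y = distr M (S \<Otimes>\<^sub>M T) (\<lambda>\<omega>. (X \<omega>, Y \<omega>))"
    using ind by (simp add: indep_var_distribution_eq)
  have "(\<integral>\<^sup>+\<omega>. h (X \<omega>) (Y \<omega>) \<partial>M) = (\<integral>\<^sup>+p. (\<lambda>(x,y). h x y) p \<partial>distr M (S \<Otimes>\<^sub>M T) (\<lambda>\<omega>. (X \<omega>, Y \<omega>)))"
    by (subst nn_integral_distr) auto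
  also have "\<dots> = (\<integral>\<^sup>+p. (\<lambda>(x,y). h x y) p \<partial>(distr M S X \<Otimes>\<^sub>M distr M T Y))"
    by (simp add: eq)
  also have "\<dots> = (\<integral>\<^sup>+x. (\<integral>\<^sup>+y. h x y \<partial>distr M T Y) \<partial>distr M S X)"
    by (subst PY.nn_integral_fst[symmetric]) auto
  also have "\<dots> = (\<integral>\<^sup>+x. (\<integral>\<^sup>+\<omega>. h x (Y \<omega>) \<partial>M) \<partial>distr M S X)"
  proof (intro nn_integral_cong)
    fix x assume "x \<in> space (distr M S X)"
    then have [measurable]: "h x \<in> borel_measurable T"
      using measurable_Pair2[OF h, of x] by auto
    show "(\<integral>\<^sup>+y. h x y \<partial>distr M T Y) = (\<integral>\<^sup>+\<omega>. h x (Y \<omega>) \<partial>M)"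
      by (subst nn_integral_distr) auto
  qed
  finally show ?thesis .
qed

lemma (in prob_space) cond_nn2:
  assumes ind: "indep_var S X T Y"
    and h[measurable]: "(\<lambda>(x,y). h x y) \<in> borel_measurable (S \<Otimes>\<^sub>M T)"
  shows "(\<integral>\<^sup>+\<omega>. h (X \<omega>) (Y \<omega>) \<partial>M) = (\<integral>\<^sup>+y. (\<integral>\<^sup>+\<omega>. h (X \<omega>) y \<partial>M) \<partial>distr M T Y)"
proof -
  have rv[measurable]: "X \<in> measurable M S" "Y \<in> measurable M T"
    using indep_var_rv1[OF ind] indep_var_rv2[OF ind] by auto
  interpret PX: prob_space "distr M S X" by (rule prob_space_distr) (rule rv)
  interpret PY: prob_space "distr M T Y" by (rule prob_space_distr) (rule rv)
  interpret XY: pair_prob_space "distr M S X" "distr M T Y" ..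
  have eq: "distr M S X \<Otimes>\<^sub>M distr M T Y = distr M (S \<Otimes>\<^sub>M T) (\<lambda>\<omega>. (X \<omega>, Y \<omega>))"
    using ind by (simp add: indep_var_distribution_eq)
  have "(\<integral>\<^sup>+\<omega>. h (X \<omega>) (Y \<omega>) \<partial>M) = (\<integral>\<^sup>+p. (\<lambda>(x,y). h x y) p \<partial>distr M (S \<Otimes>\<^sub>M T) (\<lambda>\<omega>. (X \<omega>, Y \<omega>)))"
    by (subst nn_integral_distr) auto
  also have "\<dots> = (\<integral>\<^sup>+p. (\<lambda>(x,y). h x y) p \<partial>(distr M S X \<Otimes>\<^sub>M distr M T Y))"
    by (simp add: eq)
  also have "\<dots> = (\<integral>\<^sup>+y. (\<integral>\<^sup>+x. h x y \<partial>distr M S X) \<partial>distr M T Y)"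
    by (subst XY.nn_integral_snd[symmetric]) auto
  also have "\<dots> = (\<integral>\<^sup>+y. (\<integral>\<^sup>+\<omega>. h (X \<omega>) y \<partial>M) \<partial>distr M T Y)"
  proof (intro nn_integral_cong)
    fix y assume "y \<in> space (distr M T Y)"
    then have [measurable]: "(\<lambda>x. h x y) \<in> borel_measurable S"
      using measurable_Pair1[OF h, of y] by auto
    show "(\<integral>\<^sup>+x. h x y \<partial>distr M S X) = (\<integral>\<^sup>+\<omega>. h (X \<omega>) y \<partial>M)"
      by (subst nn_integral_distr) auto
  qed
  finally show ?thesis .
qed

lemma (in prob_space) cond_M:
  assumes ind: "indep_var S X T Y"
    and h[measurable]: "(\<lambda>(x,y). h x y) \<in> borel_measurable (S \<Otimes>\<^sub>M T)"
  shows "(\<integral>\<^sup>+\<omega>. h (X \<omega>) (Y \<omega>) \<partial>M) = (\<integral>\<^sup>+\<omega>'. (\<integral>\<^sup>+\<omega>. h (X \<omega>') (Y \<omega>) \<partial>M) \<partial>M)"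
proof -
  have rv[measurable]: "X \<in> measurable M S" "Y \<in> measurable M T"
    using indep_var_rv1[OF ind] indep_var_rv2[OF ind] by auto
  interpret PY: prob_space "distr M T Y" by (rule prob_space_distr) (rule rv)
  have m: "(\<lambda>x. \<integral>\<^sup>+y. h x y \<partial>distr M T Y) \<in> borel_measurable S"
    by (rule PY.borel_measurable_nn_integral) (simp add: h)
  have eqi: "\<And>x. x \<in> space S \<Longrightarrow> (\<integral>\<^sup>+\<omega>. h x (Y \<omega>) \<partial>M) = (\<integral>\<^sup>+y. h x y \<partial>distr M T Y)"
  proof -
    fix x assume "x \<in> space S"
    then have [measurable]: "h x \<in> borel_measurable T"
      using measurable_Pair2[OF h, of x] by auto
    show "(\<integral>\<^sup>+\<omega>. h x (Y \<omega>) \<partial>M) = (\<integral>\<^sup>+y. h x y \<partial>distr M T Y)"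
      by (subst nn_integral_distr) auto
  qed
  have "(\<integral>\<^sup>+\<omega>. h (X \<omega>) (Y \<omega>) \<partial>M) = (\<integral>\<^sup>+x. (\<integral>\<^sup>+\<omega>. h x (Y \<omega>) \<partial>M) \<partial>distr M S X)"
    by (rule cond_nn[OF ind h])
  also have "\<dots> = (\<integral>\<^sup>+x. (\<integral>\<^sup>+y. h x y \<partial>distr M T Y) \<partial>distr M S X)"
    by (intro nn_integral_cong) (simp add: eqi)
  also have "\<dots> = (\<integral>\<^sup>+\<omega>'. (\<integral>\<^sup>+y. h (X \<omega>') y \<partial>distr M T Y) \<partial>M)"
    by (subst nn_integral_distr) (auto simp: m)
  also have "\<dots> = (\<integral>\<^sup>+\<omega>'. (\<integral>\<^sup>+\<omega>. h (X \<omega>') (Y \<omega>) \<partial>M) \<partial>M)"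
    using rv(1)[THEN measurable_space] by (intro nn_integral_cong) (simp add: eqi)
  finally show ?thesis .
qed

lemma (in prob_space) cond_M2:
  assumes ind: "indep_var S X T Y"
    and h[measurable]: "(\<lambda>(x,y). h x y) \<in> borel_measurable (S \<Otimes>\<^sub>M T)"
  shows "(\<integral>\<^sup>+\<omega>. h (X \<omega>) (Y \<omega>) \<partial>M) = (\<integral>\<^sup>+\<omega>. (\<integral>\<^sup>+\<omega>'. h (X \<omega>') (Y \<omega>) \<partial>M) \<partial>M)"
proof -
  have rv[measurable]: "X \<in> measurable M S" "Y \<in> measurable M T"
    using indep_var_rv1[OF ind] indep_var_rv2[OF ind] by auto
  interpret MM: pair_sigma_finite M M ..
  have m: "(\<lambda>(x,y). h (X x) (Y y)) \<in> borel_measurable (M \<Otimes>\<^sub>M M)"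
  proof -
    have "(\<lambda>p. (X (fst p), Y (snd p))) \<in> measurable (M \<Otimes>\<^sub>M M) (S \<Otimes>\<^sub>M T)" by measurable
    from measurable_compose[OF this h] show ?thesis by (simp add: case_prod_beta)
  qed
  show ?thesis
    unfolding cond_M[OF ind h] using MM.Fubini'[OF m] by simp
qed


locale setting = prob_space M
  for M :: "'a measure" +
  fixes Ys Yd C0 :: "'a \<Rightarrow> real" and C :: "nat \<Rightarrow> 'a \<Rightarrow> real"
  assumes Ys_pos: "AE \<omega> in M. 0 < Ys \<omega>"
    and Yd_pos: "AE \<omega> in M. 0 < Yd \<omega>"
    and C0_rv[measurable]: "C0 \<in> borel_measurable M"
    and C0_pos: "measure M {\<omega>\<in>space M. 0 < C0 \<omega>} = 1"
    and iid: "\<And>i. 1 \<le> i \<Longrightarrow> distr M borel (C i) = distr M borel C0"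
    and indep: "indep_vars (\<lambda>_. borel) (famRV Ys Yd C) ({IYs, IYd} \<union> {IC i | i. 1 \<le> i})"
    and mom_Ys: "integrable M (\<lambda>\<omega>. (Ys \<omega>)\<^sup>2)"
    and mom_C: "integrable M (\<lambda>\<omega>. (C0 \<omega>)\<^sup>2)"
begin

abbreviation "XX \<equiv> famRV Ys Yd C"
abbreviation "II \<equiv> {IYs, IYd} \<union> IB"

lemma indep': "indep_vars (\<lambda>_. borel) XX II"
  using indep unfolding IB_def .

lemma rv_XX: "i \<in> II \<Longrightarrow> XX i \<in> borel_measurable M"
  using indep' unfolding indep_vars_def by auto

lemma Ys_meas[measurable]: "Ys \<in> borel_measurable M"
  using rv_XX[of IYs] by (simp add: famRV_def)

lemma Yd_meas[measurable]: "Yd \<in> borel_measurable M"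
  using rv_XX[of IYd] by (simp add: famRV_def)

lemma C_meas: "1 \<le> i \<Longrightarrow> C i \<in> borel_measurable M"
  using rv_XX[of "IC i"] by (simp add: famRV_def)

definition Cs :: "'a \<Rightarrow> idx \<Rightarrow> real" where
  "Cs \<omega> = restrict (\<lambda>i. XX i \<omega>) IB"

lemma Cs_meas[measurable]: "Cs \<in> measurable M (PiM IB (\<lambda>_. borel))"
  unfolding Cs_def by (intro measurable_restrict rv_XX) auto

lemma Dsum_eq: "Dsum C n \<omega> = Dp (Cs \<omega>) n"
  unfolding Dsum_def Dp_def Cs_def by (intro sum.cong) (auto simp: famRV_def)

lemma Dsum_meas[measurable]: "(\<lambda>\<omega>. Dsum C n \<omega>) \<in> borel_measurable M"
  unfolding Dsum_eq by measurable

lemma Bbar_eq: "Bbar C t \<omega> = Bp t (Cs \<omega>)"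
  unfolding Bbar_def Bp_def Dsum_eq ..

lemma Fp_eq: "Dsum C (Bbar C t \<omega>) \<omega> - t = Fp t (Cs \<omega>)"
  unfolding Fp_def Bbar_eq Dsum_eq ..

lemma Vs_eq: "Vs C Ys \<omega> = Fp (Ys \<omega>) (Cs \<omega>) + Ys \<omega>"
  unfolding Vs_def Kr_def using Fp_eq[of "Ys \<omega>" \<omega>] by simp

definition RS :: "'a \<Rightarrow> idx \<Rightarrow> real" where
  "RS \<omega> = restrict (\<lambda>i. XX i \<omega>) {IYs}"
definition RW :: "'a \<Rightarrow> idx \<Rightarrow> real" where
  "RW \<omega> = restrict (\<lambda>i. XX i \<omega>) ({IYs} \<union> IB)"
definition RD :: "'a \<Rightarrow> idx \<Rightarrow> real" where
  "RD \<omega> = restrict (\<lambda>i. XX i \<omega>) {IYd}"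

lemma RS_Ys[simp]: "RS \<omega> IYs = Ys \<omega>"
  by (simp add: RS_def famRV_def)
lemma RW_Ys[simp]: "RW \<omega> IYs = Ys \<omega>"
  by (simp add: RW_def famRV_def)
lemma RW_Cs[simp]: "restrict (RW \<omega>) IB = Cs \<omega>"
  by (auto simp add: RW_def Cs_def fun_eq_iff restrict_def)
lemma RD_Yd[simp]: "RD \<omega> IYd = Yd \<omega>"
  by (simp add: RD_def famRV_def)

lemma I1: "indep_var (PiM {IYs} (\<lambda>_. borel)) RS (PiM IB (\<lambda>_. borel)) Cs"
  unfolding RS_def Cs_def by (rule indep_var_restrict[OF indep']) (auto simp: IB_def)

lemma I2: "indep_var (PiM ({IYs} \<union> IB) (\<lambda>_. borel)) RW (PiM {IYd} (\<lambda>_. borel)) RD"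
  unfolding RW_def RD_def by (rule indep_var_restrict[OF indep']) (auto simp: IB_def)

end


context setting begin

lemma C0_AE: "AE \<omega> in M. 0 < C0 \<omega>"
  using AE_prob_1[OF C0_pos] by auto

lemma C_AE: assumes "1 \<le> i" shows "AE \<omega> in M. 0 < C i \<omega>"
proof -
  note [measurable] = C_meas[OF assms]
  have "measure M {\<omega>\<in>space M. 0 < C i \<omega>} = measure (distr M borel (C i)) {0<..}"
    by (subst measure_distr) (auto intro!: arg_cong[where f="measure M"])
  also have "\<dots> = measure (distr M borel C0) {0<..}" by (simp add: iid[OF assms])
  also have "\<dots> = 1"
    by (subst measure_distr) (auto simp: C0_pos[symmetric] intro!: arg_cong[where f="measure M"])
  finally have "prob {\<omega>\<in>space M. 0 < C i \<omega>} = 1" .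
  from AE_prob_1[OF this] show ?thesis by eventually_elim auto
qed

lemma C_all_AE: "AE \<omega> in M. \<forall>i\<ge>1. 0 < C i \<omega>"
  by (subst AE_all_countable) (auto intro: C_AE)

lemma Lap_eq: assumes "1 \<le> i" shows "(\<integral>\<omega>. exp (- s * C i \<omega>) \<partial>M) = Lap M C0 s"
proof -
  note [measurable] = C_meas[OF assms]
  have "(\<integral>\<omega>. exp (- s * C i \<omega>) \<partial>M) = (\<integral>x. exp (- s * x) \<partial>distr M borel (C i))"
    by (subst integral_distr) auto
  also have "\<dots> = (\<integral>x. exp (- s * x) \<partial>distr M borel C0)" by (simp add: iid[OF assms])
  also have "\<dots> = Lap M C0 s" unfolding Lap_def by (subst integral_distr) auto
  finally show ?thesis .
qed

lemma int_expC: assumes "1 \<le> i" "0 \<le> s" shows "integrable M (\<lambda>\<omega>. exp (- s * C i \<omega>))"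
proof -
  note [measurable] = C_meas[OF assms(1)]
  show ?thesis
    by (rule integrable_const_bound[where B=1])
       (use C_AE[OF assms(1)] assms(2) in \<open>auto elim!: eventually_mono simp: mult_nonneg_nonneg\<close>)
qed

lemma Lap_lt1: assumes "0 < s" shows "Lap M C0 s < 1"
proof -
  have "Lap M C0 s = (\<integral>\<omega>. exp (- s * C 1 \<omega>) \<partial>M)" using Lap_eq[of 1] by simp
  also have "\<dots> < (\<integral>\<omega>. 1 \<partial>M)"
    by (rule integral_less_AE_space)
       (use int_expC[of 1 s] assms C_AE[of 1] in \<open>auto elim!: eventually_mono simp: emeasure_space_1\<close>)
  finally show ?thesis by (simp add: prob_space)
qed

lemma Lap_ge0: "0 \<le> Lap M C0 s"
  unfolding Lap_def by (intro integral_nonneg_AE) auto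

lemma expD_prod: "(\<integral>\<omega>. exp (- s * Dsum C n \<omega>) \<partial>M) = (\<integral>\<omega>. (\<Prod>i\<in>IC ` {1..n}. exp (- s * XX i \<omega>)) \<partial>M)"
proof -
  have "exp (- s * Dsum C n \<omega>) = (\<Prod>i\<in>IC ` {1..n}. exp (- s * XX i \<omega>))" for \<omega>
    by (simp add: Dsum_def sum_distrib_left exp_sum prod.reindex inj_on_def famRV_def flip: sum_negf)
  then show ?thesis by simp
qed

lemma expD: assumes "0 \<le> s" shows "(\<integral>\<omega>. exp (- s * Dsum C n \<omega>) \<partial>M) = Lap M C0 s ^ n"
    and "integrable M (\<lambda>\<omega>. exp (- s * Dsum C n \<omega>))"
proof -
  have ind: "indep_vars (\<lambda>_. borel) (\<lambda>i \<omega>. exp (- s * XX i \<omega>)) (IC ` {1..n})"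
    by (rule indep_vars_compose2[where X=XX and M'="\<lambda>_. borel", OF indep_vars_subset[OF indep']])
       (auto simp: IB_def)
  have int: "i \<in> IC ` {1..n} \<Longrightarrow> integrable M (\<lambda>\<omega>. exp (- s * XX i \<omega>))" for i
    using int_expC[OF _ assms] by (auto simp: famRV_def)
  have "(\<integral>\<omega>. exp (- s * Dsum C n \<omega>) \<partial>M) = (\<Prod>i\<in>IC ` {1..n}. \<integral>\<omega>. exp (- s * XX i \<omega>) \<partial>M)"
    unfolding expD_prod by (rule indep_vars_lebesgue_integral[OF _ ind int]) auto
  also have "\<dots> = (\<Prod>i\<in>{1..n}. \<integral>\<omega>. exp (- s * C i \<omega>) \<partial>M)"
    by (subst prod.reindex) (auto simp: inj_on_def famRV_def)
  also have "\<dots> = (\<Prod>i\<in>{1..n}. Lap M C0 s)"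
    by (intro prod.cong refl Lap_eq) auto
  finally show "(\<integral>\<omega>. exp (- s * Dsum C n \<omega>) \<partial>M) = Lap M C0 s ^ n" by simp
  have "integrable M (\<lambda>\<omega>. (\<Prod>i\<in>IC ` {1..n}. exp (- s * XX i \<omega>)))"
    by (rule indep_vars_integrable[OF _ ind int]) auto
  moreover have "exp (- s * Dsum C n \<omega>) = (\<Prod>i\<in>IC ` {1..n}. exp (- s * XX i \<omega>))" for \<omega>
    by (simp add: Dsum_def sum_distrib_left exp_sum prod.reindex inj_on_def famRV_def flip: sum_negf)
  ultimately show "integrable M (\<lambda>\<omega>. exp (- s * Dsum C n \<omega>))" by simp
qed

end


context setting begin

lemma div_m: "AE \<omega> in M. \<exists>n. real m \<le> Dsum C n \<omega>"
proof -
  define A where "A = {\<omega>\<in>space M. \<forall>n. Dsum C n \<omega> < real m}"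
  have A[measurable]: "A \<in> sets M" unfolding A_def by measurable
  have le: "prob A \<le> Lap M C0 1 ^ n / exp (- real m)" for n
  proof -
    have "prob A \<le> prob {\<omega>\<in>space M. exp (- real m) \<le> exp (- 1 * Dsum C n \<omega>)}"
      by (rule finite_measure_mono) (auto simp: A_def less_imp_le)
    also have "\<dots> \<le> (\<integral>\<omega>. exp (- 1 * Dsum C n \<omega>) \<partial>M) / exp (- real m)"
      by (rule integral_Markov_inequality_measure[OF expD(2)[of 1 n] A]) auto
    also have "\<dots> = Lap M C0 1 ^ n / exp (- real m)" using expD(1)[of 1 n] by simp
    finally show ?thesis .
  qed
  have lim: "(\<lambda>n. Lap M C0 1 ^ n / exp (- real m)) \<longlonglongrightarrow> 0"
    using LIMSEQ_power_zero[of "Lap M C0 1"] Lap_lt1[of 1] Lap_ge0[of 1]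
    by (intro tendsto_divide_zero) auto
  have "prob A \<le> 0"
    by (rule LIMSEQ_le_const[OF lim]) (use le in auto)
  then have "prob A = 0" using measure_nonneg[of M A] by linarith
  then have "prob (space M - A) = 1" using prob_compl[OF A] by simp
  from AE_prob_1[OF this] show ?thesis by eventually_elim (auto simp: A_def not_less)
qed

lemma good_AE: "AE \<omega> in M. (\<forall>t. \<exists>n. t \<le> Dsum C n \<omega>) \<and> (\<forall>i\<ge>1. 0 < C i \<omega>) \<and> 0 < Ys \<omega> \<and> 0 < Yd \<omega>"
proof -
  have "AE \<omega> in M. \<forall>m. \<exists>n. real m \<le> Dsum C n \<omega>"
    by (subst AE_all_countable) (auto intro: div_m)
  then have "AE \<omega> in M. \<forall>t. \<exists>n. t \<le> Dsum C n \<omega>"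
  proof (eventually_elim)
    case (elim \<omega>)
    show ?case
    proof
      fix t :: real
      obtain m :: nat where "t \<le> real m" using real_arch_simple by blast
      with elim show "\<exists>n. t \<le> Dsum C n \<omega>" by (meson order_trans)
    qed
  qed
  with C_all_AE Ys_pos Yd_pos show ?thesis by eventually_elim auto
qed

end


lemma Dsum_0[simp]: "Dsum C 0 \<omega> = 0" by (simp add: Dsum_def)

lemma Dsum_Suc: "Dsum C (Suc n) \<omega> = Dsum C n \<omega> + C (Suc n) \<omega>"
  by (simp add: Dsum_def)

context
  fixes C :: "nat \<Rightarrow> 'a \<Rightarrow> real" and \<omega> :: 'a
  assumes pos: "\<forall>i\<ge>1. 0 < C i \<omega>" and unb: "\<forall>t. \<exists>n. t \<le> Dsum C n \<omega>"
begin

lemma Dsum_mono: "m \<le> n \<Longrightarrow> Dsum C m \<omega> \<le> Dsum C n \<omega>"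
  by (rule lift_Suc_mono_le[of "\<lambda>n. Dsum C n \<omega>"]) (use pos in \<open>auto simp: Dsum_Suc less_imp_le\<close>)

lemma Dsum_strict: "m < n \<Longrightarrow> Dsum C m \<omega> < Dsum C n \<omega>"
  by (rule lift_Suc_mono_less[of "\<lambda>n. Dsum C n \<omega>"]) (use pos in \<open>auto simp: Dsum_Suc\<close>)

lemma Bbar_ex: "\<exists>n. 1 \<le> n \<and> t \<le> Dsum C n \<omega>"
proof -
  obtain n where n: "t \<le> Dsum C n \<omega>" using unb by blast
  then have "t \<le> Dsum C (max n 1) \<omega>" using Dsum_mono[of n "max n 1"] by auto
  then show ?thesis by (intro exI[of _ "max n 1"]) auto
qed

lemma Bbar_ge1: "1 \<le> Bbar C t \<omega>"
  unfolding Bbar_def using LeastI_ex[OF Bbar_ex[of t]] by blast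

lemma Bbar_le: "t \<le> Dsum C (Bbar C t \<omega>) \<omega>"
  unfolding Bbar_def using LeastI_ex[OF Bbar_ex[of t]] by blast

lemma Bbar_less: "1 \<le> n \<Longrightarrow> n < Bbar C t \<omega> \<Longrightarrow> Dsum C n \<omega> < t"
  unfolding Bbar_def using not_less_Least[of n "\<lambda>n. 1 \<le> n \<and> t \<le> Dsum C n \<omega>"] by auto

lemma Bbar_set: "0 < t \<Longrightarrow> {n. Dsum C n \<omega> < t} = {..<Bbar C t \<omega>}"
proof safe
  fix n assume "0 < t" "Dsum C n \<omega> < t"
  then show "n < Bbar C t \<omega>"
    using Bbar_le[of t] Dsum_mono[of "Bbar C t \<omega>" n] by (cases "n < Bbar C t \<omega>") auto
next
  fix n assume "0 < t" "n < Bbar C t \<omega>"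
  then show "Dsum C n \<omega> < t" using Bbar_less[of n t] by (cases n) auto
qed

lemma Bbar_count: "0 < t \<Longrightarrow> (\<Sum>n. (if Dsum C n \<omega> < t then 1 else 0 :: ennreal)) = of_nat (Bbar C t \<omega>)"
proof -
  assume t: "0 < t"
  have "(\<Sum>n. (if Dsum C n \<omega> < t then 1 else 0 :: ennreal)) = (\<Sum>n\<in>{..<Bbar C t \<omega>}. (if Dsum C n \<omega> < t then 1 else 0 :: ennreal))"
    by (rule suminf_finite) (use Bbar_set[OF t] in auto)
  also have "\<dots> = (\<Sum>n\<in>{..<Bbar C t \<omega>}. 1)"
    by (intro sum.cong) (use Bbar_set[OF t] in auto)
  finally show ?thesis by simp
qed

lemma Bbar_eq_iff: "0 < t \<Longrightarrow> 1 \<le> k \<Longrightarrow> Bbar C t \<omega> = k \<longleftrightarrow> Dsum C (k - 1) \<omega> < t \<and> t \<le> Dsum C k \<omega>"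
proof -
  assume t: "0 < t" and k: "1 \<le> k"
  have "Bbar C t \<omega> = k \<longleftrightarrow> k - 1 \<in> {..<Bbar C t \<omega>} \<and> k \<notin> {..<Bbar C t \<omega>}"
    using k by auto
  also have "\<dots> \<longleftrightarrow> Dsum C (k - 1) \<omega> < t \<and> t \<le> Dsum C k \<omega>"
    unfolding Bbar_set[OF t, symmetric] by auto
  finally show ?thesis .
qed

end

context setting begin

definition good :: "'a \<Rightarrow> bool" where
  "good \<omega> \<longleftrightarrow> (\<forall>t. \<exists>n. t \<le> Dsum C n \<omega>) \<and> (\<forall>i\<ge>1. 0 < C i \<omega>) \<and> 0 < Ys \<omega> \<and> 0 < Yd \<omega>"

lemma good_AE': "AE \<omega> in M. good \<omega>"
  unfolding good_def using good_AE .

lemma claim1_term: "(\<integral>\<^sup>+\<omega>. ennreal (surv M Ys (Dsum C n \<omega>)) \<partial>M)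
    = emeasure M {\<omega>\<in>space M. Dsum C n \<omega> < Ys \<omega>}"
proof -
  define h where "h a c = (if Dp c n < a IYs then 1 else 0 :: ennreal)" for a c
  have hm: "(\<lambda>(a,c). h a c) \<in> borel_measurable (PiM {IYs} (\<lambda>_. borel) \<Otimes>\<^sub>M PiM IB (\<lambda>_. borel))"
    unfolding h_def by measurable
  have "(\<integral>\<^sup>+\<omega>. h (RS \<omega>) (Cs \<omega>) \<partial>M) = (\<integral>\<^sup>+\<omega>. indicator {\<omega>\<in>space M. Dsum C n \<omega> < Ys \<omega>} \<omega> \<partial>M)"
    by (intro nn_integral_cong) (auto simp: h_def Dsum_eq indicator_def)
  also have "\<dots> = emeasure M {\<omega>\<in>space M. Dsum C n \<omega> < Ys \<omega>}"
    by (rule nn_integral_indicator) measurable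
  finally have "emeasure M {\<omega>\<in>space M. Dsum C n \<omega> < Ys \<omega>} = (\<integral>\<^sup>+\<omega>. h (RS \<omega>) (Cs \<omega>) \<partial>M)" ..
  also have "\<dots> = (\<integral>\<^sup>+\<omega>. (\<integral>\<^sup>+\<omega>'. h (RS \<omega>') (Cs \<omega>) \<partial>M) \<partial>M)"
    by (rule cond_M2[OF I1 hm])
  also have "\<dots> = (\<integral>\<^sup>+\<omega>. ennreal (surv M Ys (Dsum C n \<omega>)) \<partial>M)"
  proof (intro nn_integral_cong)
    fix \<omega> assume "\<omega> \<in> space M"
    have "(\<integral>\<^sup>+\<omega>'. h (RS \<omega>') (Cs \<omega>) \<partial>M) = (\<integral>\<^sup>+\<omega>'. indicator {\<omega>'\<in>space M. Dsum C n \<omega> < Ys \<omega>'} \<omega>' \<partial>M)"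
      by (intro nn_integral_cong) (auto simp: h_def Dsum_eq indicator_def)
    also have "\<dots> = ennreal (surv M Ys (Dsum C n \<omega>))"
      by (subst nn_integral_indicator) (auto simp: surv_def emeasure_eq_measure)
    finally show "(\<integral>\<^sup>+\<omega>'. h (RS \<omega>') (Cs \<omega>) \<partial>M) = ennreal (surv M Ys (Dsum C n \<omega>))" .
  qed
  finally show ?thesis ..
qed

lemma claim1: "(\<integral>\<^sup>+\<omega>. ennreal (real (Kr C Ys \<omega>)) \<partial>M)
        = (\<Sum>n. \<integral>\<^sup>+\<omega>. ennreal (surv M Ys (Dsum C n \<omega>)) \<partial>M)"
proof -
  have "(\<integral>\<^sup>+\<omega>. ennreal (real (Kr C Ys \<omega>)) \<partial>M)
      = (\<integral>\<^sup>+\<omega>. (\<Sum>n. indicator {\<omega>\<in>space M. Dsum C n \<omega> < Ys \<omega>} \<omega>) \<partial>M)"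
  proof (intro nn_integral_cong_AE)
    show "AE \<omega> in M. ennreal (real (Kr C Ys \<omega>)) = (\<Sum>n. indicator {\<omega>\<in>space M. Dsum C n \<omega> < Ys \<omega>} \<omega>)"
      using good_AE' AE_space
    proof eventually_elim
      case (elim \<omega>)
      then have g: "\<forall>i\<ge>1. 0 < C i \<omega>" "\<forall>t. \<exists>n. t \<le> Dsum C n \<omega>" "0 < Ys \<omega>"
        by (auto simp: good_def)
      have "(\<Sum>n. indicator {\<omega>\<in>space M. Dsum C n \<omega> < Ys \<omega>} \<omega>) = (\<Sum>n. (if Dsum C n \<omega> < Ys \<omega> then 1 else 0 :: ennreal))"
        using elim by (auto simp: indicator_def of_bool_def)
      also have "\<dots> = of_nat (Kr C Ys \<omega>)"
        unfolding Kr_def by (rule Bbar_count[OF g])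
      finally show ?case by (simp add: ennreal_of_nat_eq_real_of_nat)
    qed
  qed
  also have "\<dots> = (\<Sum>n. \<integral>\<^sup>+\<omega>. indicator {\<omega>\<in>space M. Dsum C n \<omega> < Ys \<omega>} \<omega> \<partial>M)"
    by (rule nn_integral_suminf) measurable
  also have "\<dots> = (\<Sum>n. \<integral>\<^sup>+\<omega>. ennreal (surv M Ys (Dsum C n \<omega>)) \<partial>M)"
    by (simp add: claim1_term)
  finally show ?thesis .
qed

end


lemma meas_Fp'[measurable (raw)]:
  "f \<in> borel_measurable N \<Longrightarrow> g \<in> measurable N (PiM IB (\<lambda>_. borel)) \<Longrightarrow> (\<lambda>x. Fp (f x) (g x)) \<in> borel_measurable N"
  using measurable_compose[OF measurable_Pair meas_Fp] by (simp add: case_prod_beta)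

lemma meas_Dp_Bp'[measurable (raw)]:
  "f \<in> borel_measurable N \<Longrightarrow> g \<in> measurable N (PiM IB (\<lambda>_. borel)) \<Longrightarrow> (\<lambda>x. Dp (g x) (Bp (f x) (g x))) \<in> borel_measurable N"
  using measurable_compose[OF measurable_Pair meas_Dp_Bp] by (simp add: case_prod_beta)

lemma comp_IYs1[measurable]: "(\<lambda>w. w IYs) \<in> borel_measurable (PiM ({IYs} \<union> IB) (\<lambda>_. borel))"
  by (rule measurable_component_singleton) auto
lemma comp_IYs2[measurable]: "(\<lambda>w. w IYs) \<in> borel_measurable (PiM {IYs} (\<lambda>_. borel))"
  by (rule measurable_component_singleton) auto
lemma comp_IYd[measurable]: "(\<lambda>w. w IYd) \<in> borel_measurable (PiM {IYd} (\<lambda>_. borel))"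
  by (rule measurable_component_singleton) auto
lemma restr_IB[measurable]: "(\<lambda>w. restrict w IB) \<in> measurable (PiM ({IYs} \<union> IB) (\<lambda>_. borel)) (PiM IB (\<lambda>_. borel))"
  by (rule measurable_restrict_subset) auto

lemma comp_IYs1'[measurable]: "(\<lambda>w. w IYs) \<in> borel_measurable (PiM (insert IYs IB) (\<lambda>_. borel))"
  by (rule measurable_component_singleton) auto
lemma restr_IB'[measurable]: "(\<lambda>w. restrict w IB) \<in> measurable (PiM (insert IYs IB) (\<lambda>_. borel)) (PiM IB (\<lambda>_. borel))"
  by (rule measurable_restrict_subset) auto

lemma surv_meas[measurable]:
  assumes "prob_space M" "X \<in> borel_measurable M"
  shows "surv M X \<in> borel_measurable borel"
proof -
  interpret prob_space M by fact
  have "mono (\<lambda>x. - surv M X x)"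
    unfolding surv_def mono_def using assms(2)
    by (auto intro!: finite_measure_mono)
  from borel_measurable_mono[OF this] have "(\<lambda>x. - (- surv M X x)) \<in> borel_measurable borel"
    by measurable
  then show ?thesis by simp
qed

lemma surv_nonneg: "0 \<le> surv M X x" by (simp add: surv_def)
lemma (in prob_space) surv_le1: "surv M X x \<le> 1" by (simp add: surv_def)

context setting begin

lemma surv_Yd_meas[measurable]: "surv M Yd \<in> borel_measurable borel"
  by (rule surv_meas) (auto simp: prob_space_axioms)

lemma compl_Pd: "1 - Pd M C Ys Yd = prob {\<omega>\<in>space M. Fp (Ys \<omega>) (Cs \<omega>) < Yd \<omega>}"
proof -
  have A: "{\<omega>\<in>space M. Zd Ys Yd \<omega> \<le> Vs C Ys \<omega>} = {\<omega>\<in>space M. Yd \<omega> \<le> Fp (Ys \<omega>) (Cs \<omega>)}"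
    by (auto simp: Zd_def Vs_eq)
  have B[measurable]: "{\<omega>\<in>space M. Yd \<omega> \<le> Fp (Ys \<omega>) (Cs \<omega>)} \<in> sets M" by measurable
  have "1 - Pd M C Ys Yd = prob (space M - {\<omega>\<in>space M. Yd \<omega> \<le> Fp (Ys \<omega>) (Cs \<omega>)})"
    unfolding Pd_def A by (simp add: prob_compl)
  also have "space M - {\<omega>\<in>space M. Yd \<omega> \<le> Fp (Ys \<omega>) (Cs \<omega>)} = {\<omega>\<in>space M. Fp (Ys \<omega>) (Cs \<omega>) < Yd \<omega>}"
    by auto
  finally show ?thesis .
qed

lemma step_W: "(\<lambda>(w,d). g w d) \<in> borel_measurable (PiM ({IYs} \<union> IB) (\<lambda>_. borel) \<Otimes>\<^sub>M PiM {IYd} (\<lambda>_. borel)) \<Longrightarrow>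
  (\<integral>\<^sup>+\<omega>. g (RW \<omega>) (RD \<omega>) \<partial>M) = (\<integral>\<^sup>+\<omega>'. (\<integral>\<^sup>+\<omega>. g (RW \<omega>') (RD \<omega>) \<partial>M) \<partial>M)"
  by (rule cond_M[OF I2])

lemma step_S: "(\<lambda>(a,c). g a c) \<in> borel_measurable (PiM {IYs} (\<lambda>_. borel) \<Otimes>\<^sub>M PiM IB (\<lambda>_. borel)) \<Longrightarrow>
  (\<integral>\<^sup>+\<omega>. g (RS \<omega>) (Cs \<omega>) \<partial>M) = (\<integral>\<^sup>+\<omega>'. (\<integral>\<^sup>+\<omega>. g (RS \<omega>') (Cs \<omega>) \<partial>M) \<partial>M)"
  by (rule cond_M[OF I1])

lemma claim2_nn: "emeasure M {\<omega>\<in>space M. Fp (Ys \<omega>) (Cs \<omega>) < Yd \<omega>}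
   = (\<integral>\<^sup>+\<omega>'. (\<integral>\<^sup>+\<omega>. ennreal (surv M Yd (Fp (Ys \<omega>') (Cs \<omega>))) \<partial>M) \<partial>M)"
proof -
  define g where "g w d = (if Fp (w IYs) (restrict w IB) < d IYd then 1 else 0 :: ennreal)" for w d
  have "emeasure M {\<omega>\<in>space M. Fp (Ys \<omega>) (Cs \<omega>) < Yd \<omega>} = (\<integral>\<^sup>+\<omega>. indicator {\<omega>\<in>space M. Fp (Ys \<omega>) (Cs \<omega>) < Yd \<omega>} \<omega> \<partial>M)"
    by (rule nn_integral_indicator[symmetric]) measurable
  also have "\<dots> = (\<integral>\<^sup>+\<omega>. g (RW \<omega>) (RD \<omega>) \<partial>M)"
    by (intro nn_integral_cong) (auto simp: g_def indicator_def)
  also have "\<dots> = (\<integral>\<^sup>+\<omega>'. (\<integral>\<^sup>+\<omega>. g (RW \<omega>') (RD \<omega>) \<partial>M) \<partial>M)"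
    by (rule step_W) (unfold g_def, measurable)
  also have "\<dots> = (\<integral>\<^sup>+\<omega>'. ennreal (surv M Yd (Fp (Ys \<omega>') (Cs \<omega>'))) \<partial>M)"
  proof (intro nn_integral_cong)
    fix \<omega>' assume "\<omega>' \<in> space M"
    have "(\<integral>\<^sup>+\<omega>. g (RW \<omega>') (RD \<omega>) \<partial>M) = (\<integral>\<^sup>+\<omega>. indicator {\<omega>\<in>space M. Fp (Ys \<omega>') (Cs \<omega>') < Yd \<omega>} \<omega> \<partial>M)"
      by (intro nn_integral_cong) (auto simp: g_def indicator_def)
    also have "\<dots> = ennreal (surv M Yd (Fp (Ys \<omega>') (Cs \<omega>')))"
      by (subst nn_integral_indicator) (auto simp: surv_def emeasure_eq_measure)
    finally show "(\<integral>\<^sup>+\<omega>. g (RW \<omega>') (RD \<omega>) \<partial>M) = ennreal (surv M Yd (Fp (Ys \<omega>') (Cs \<omega>')))" .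
  qed
  also have "\<dots> = (\<integral>\<^sup>+\<omega>. (\<lambda>a c. ennreal (surv M Yd (Fp (a IYs) c))) (RS \<omega>) (Cs \<omega>) \<partial>M)"
    by simp
  also have "\<dots> = (\<integral>\<^sup>+\<omega>'. (\<integral>\<^sup>+\<omega>. ennreal (surv M Yd (Fp (RS \<omega>' IYs) (Cs \<omega>))) \<partial>M) \<partial>M)"
    by (rule step_S) measurable
  finally show ?thesis by simp
qed

end


context setting begin

lemma G_meas[measurable]: "(\<lambda>t. \<integral>\<^sup>+\<omega>. ennreal (surv M Yd (Fp t (Cs \<omega>))) \<partial>M) \<in> borel_measurable borel"
  by measurable

lemma G_fin: "(\<integral>\<^sup>+\<omega>. ennreal (surv M Yd (Fp t (Cs \<omega>))) \<partial>M) < top"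
proof -
  have "(\<integral>\<^sup>+\<omega>. ennreal (surv M Yd (Fp t (Cs \<omega>))) \<partial>M) \<le> (\<integral>\<^sup>+\<omega>. 1 \<partial>M)"
    by (intro nn_integral_mono) (simp add: surv_le1)
  also have "\<dots> = 1" by (simp add: emeasure_space_1)
  finally show ?thesis by (simp add: le_less_trans)
qed

lemma claim2: "1 - Pd M C Ys Yd
        = (\<integral>t. (\<integral>\<omega>. surv M Yd (Dsum C (Bbar C t \<omega>) \<omega> - t) \<partial>M) \<partial>(distr M borel Ys))"
proof -
  let ?G = "\<lambda>t. \<integral>\<^sup>+\<omega>. ennreal (surv M Yd (Fp t (Cs \<omega>))) \<partial>M"
  have inner: "(\<integral>\<omega>. surv M Yd (Dsum C (Bbar C t \<omega>) \<omega> - t) \<partial>M) = enn2real (?G t)" for t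
    unfolding Fp_eq by (rule integral_eq_nn_integral) (auto simp: surv_nonneg)
  have "(\<integral>t. (\<integral>\<omega>. surv M Yd (Dsum C (Bbar C t \<omega>) \<omega> - t) \<partial>M) \<partial>(distr M borel Ys))
      = (\<integral>t. enn2real (?G t) \<partial>(distr M borel Ys))"
    by (simp add: inner)
  also have "\<dots> = enn2real (\<integral>\<^sup>+t. ennreal (enn2real (?G t)) \<partial>(distr M borel Ys))"
    by (rule integral_eq_nn_integral) auto
  also have "\<dots> = enn2real (\<integral>\<^sup>+t. ?G t \<partial>(distr M borel Ys))"
    by (simp add: G_fin)
  also have "\<dots> = enn2real (\<integral>\<^sup>+\<omega>'. ?G (Ys \<omega>') \<partial>M)"
    by (subst nn_integral_distr) auto
  also have "\<dots> = enn2real (emeasure M {\<omega>\<in>space M. Fp (Ys \<omega>) (Cs \<omega>) < Yd \<omega>})"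
    by (simp add: claim2_nn)
  also have "\<dots> = 1 - Pd M C Ys Yd"
    by (simp add: compl_Pd emeasure_eq_measure)
  finally show ?thesis ..
qed

end


definition kk :: "real \<Rightarrow> real \<Rightarrow> real \<Rightarrow> ennreal" where
  "kk y a b = (if 0 \<le> y \<and> y < a \<and> y < b then 1 else 0)"

lemma kk_meas0: "(\<lambda>p. kk (fst p) (fst (snd p)) (snd (snd p))) \<in> borel_measurable (borel \<Otimes>\<^sub>M borel \<Otimes>\<^sub>M borel)"
  unfolding kk_def by measurable

lemma kk_meas[measurable (raw)]:
  "f \<in> borel_measurable N \<Longrightarrow> g \<in> borel_measurable N \<Longrightarrow> h \<in> borel_measurable N \<Longrightarrow> (\<lambda>x. kk (f x) (g x) (h x)) \<in> borel_measurable N"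
  using measurable_compose[OF measurable_Pair[of f N borel "\<lambda>x. (g x, h x)"] kk_meas0]
  by (simp add: measurable_Pair)

lemma kk_int: "(\<integral>\<^sup>+y. kk y a b \<partial>lborel) = ennreal (min a b)"
proof (cases "0 \<le> min a b")
  case True
  have "(\<integral>\<^sup>+y. kk y a b \<partial>lborel) = (\<integral>\<^sup>+y. indicator {0..<min a b} y \<partial>lborel)"
    by (intro nn_integral_cong) (auto simp: kk_def indicator_def)
  also have "\<dots> = ennreal (min a b)" using True by simp
  finally show ?thesis .
next
  case False
  then have "kk y a b = 0" for y by (auto simp: kk_def)
  moreover have "min a b \<le> 0" using False by linarith
  ultimately show ?thesis by (simp add: ennreal_neg)
qed

context setting begin

interpretation LM: pair_sigma_finite lborel M
  by (rule pair_sigma_finite.intro) (rule lborel.sigma_finite_measure_axioms, rule sigma_finite_measure_axioms)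

lemma P1:
  "ennreal (measure M {\<omega>\<in>space M. y < Fp t (Cs \<omega>)} * surv M Yd y) * indicator {0..} y
    = (\<integral>\<^sup>+\<omega>''. (\<integral>\<^sup>+\<omega>. kk y (Fp t (Cs \<omega>'')) (Yd \<omega>) \<partial>M) \<partial>M)"
proof (cases "0 \<le> y")
  case False
  then show ?thesis by (simp add: kk_def)
next
  case True
  define S1 where "S1 = {\<omega>\<in>space M. y < Fp t (Cs \<omega>)}"
  define S2 where "S2 = {\<omega>\<in>space M. y < Yd \<omega>}"
  have [measurable]: "S1 \<in> sets M" "S2 \<in> sets M" unfolding S1_def S2_def by measurable
  have "(\<integral>\<^sup>+\<omega>''. (\<integral>\<^sup>+\<omega>. kk y (Fp t (Cs \<omega>'')) (Yd \<omega>) \<partial>M) \<partial>M)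
      = (\<integral>\<^sup>+\<omega>''. (\<integral>\<^sup>+\<omega>. indicator S1 \<omega>'' * indicator S2 \<omega> \<partial>M) \<partial>M)"
    by (intro nn_integral_cong) (auto simp: kk_def S1_def S2_def indicator_def True)
  also have "\<dots> = (\<integral>\<^sup>+\<omega>''. indicator S1 \<omega>'' * emeasure M S2 \<partial>M)"
    by (subst nn_integral_cmult) auto
  also have "\<dots> = emeasure M S1 * emeasure M S2"
    by (subst nn_integral_multc) auto
  also have "\<dots> = ennreal (measure M {\<omega>\<in>space M. y < Fp t (Cs \<omega>)} * surv M Yd y) * indicator {0..} y"
    using True by (simp add: S1_def S2_def surv_def emeasure_eq_measure ennreal_mult)
  finally show ?thesis ..
qed

lemma Psi_eq:
  "(\<integral>\<^sup>+y\<in>{0..}. ennreal (measure M {\<omega>\<in>space M. y < Fp t (Cs \<omega>)} * surv M Yd y) \<partial>lborel)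
    = (\<integral>\<^sup>+\<omega>''. (\<integral>\<^sup>+\<omega>. ennreal (min (Fp t (Cs \<omega>'')) (Yd \<omega>)) \<partial>M) \<partial>M)"
proof -
  have "(\<integral>\<^sup>+y\<in>{0..}. ennreal (measure M {\<omega>\<in>space M. y < Fp t (Cs \<omega>)} * surv M Yd y) \<partial>lborel)
     = (\<integral>\<^sup>+y. (\<integral>\<^sup>+\<omega>''. (\<integral>\<^sup>+\<omega>. kk y (Fp t (Cs \<omega>'')) (Yd \<omega>) \<partial>M) \<partial>M) \<partial>lborel)"
    by (simp add: P1)
  also have "\<dots> = (\<integral>\<^sup>+\<omega>''. (\<integral>\<^sup>+y. (\<integral>\<^sup>+\<omega>. kk y (Fp t (Cs \<omega>'')) (Yd \<omega>) \<partial>M) \<partial>lborel) \<partial>M)"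
    by (rule LM.Fubini'[symmetric]) measurable
  also have "\<dots> = (\<integral>\<^sup>+\<omega>''. (\<integral>\<^sup>+\<omega>. (\<integral>\<^sup>+y. kk y (Fp t (Cs \<omega>'')) (Yd \<omega>) \<partial>lborel) \<partial>M) \<partial>M)"
    by (intro nn_integral_cong LM.Fubini'[symmetric]) measurable
  also have "\<dots> = (\<integral>\<^sup>+\<omega>''. (\<integral>\<^sup>+\<omega>. ennreal (min (Fp t (Cs \<omega>'')) (Yd \<omega>)) \<partial>M) \<partial>M)"
    by (simp add: kk_int)
  finally show ?thesis .
qed

end


context setting begin

lemma Fp_nonneg: "good \<omega> \<Longrightarrow> 0 \<le> Fp t (Cs \<omega>)"
  unfolding Fp_eq[symmetric] good_def using Bbar_le[of C \<omega> t] by auto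

lemma Xr_eq: "Xr C Ys Yd \<omega> = Ys \<omega> + min (Fp (Ys \<omega>) (Cs \<omega>)) (Yd \<omega>)"
  unfolding Xr_def Vs_eq Zd_def by (simp add: min_def)

lemma Phi_meas[measurable]: "(\<lambda>t. \<integral>\<^sup>+\<omega>''. (\<integral>\<^sup>+\<omega>. ennreal (min (Fp t (Cs \<omega>'')) (Yd \<omega>)) \<partial>M) \<partial>M) \<in> borel_measurable borel"
  by measurable

lemma min_part: "(\<integral>\<^sup>+\<omega>. ennreal (min (Fp (Ys \<omega>) (Cs \<omega>)) (Yd \<omega>)) \<partial>M)
  = (\<integral>\<^sup>+t. (\<integral>\<^sup>+\<omega>''. (\<integral>\<^sup>+\<omega>. ennreal (min (Fp t (Cs \<omega>'')) (Yd \<omega>)) \<partial>M) \<partial>M) \<partial>distr M borel Ys)"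
proof -
  define g where "g w d = ennreal (min (Fp (w IYs) (restrict w IB)) (d IYd))" for w d
  define g2 where "g2 a c = (\<integral>\<^sup>+\<omega>. ennreal (min (Fp (a IYs) c) (Yd \<omega>)) \<partial>M)" for a c
  have 1: "(\<integral>\<^sup>+\<omega>. g (RW \<omega>) (RD \<omega>) \<partial>M) = (\<integral>\<^sup>+\<omega>'. (\<integral>\<^sup>+\<omega>. g (RW \<omega>') (RD \<omega>) \<partial>M) \<partial>M)"
    by (rule step_W) (unfold g_def, measurable)
  have 2: "(\<integral>\<^sup>+\<omega>. g2 (RS \<omega>) (Cs \<omega>) \<partial>M) = (\<integral>\<^sup>+\<omega>'. (\<integral>\<^sup>+\<omega>. g2 (RS \<omega>') (Cs \<omega>) \<partial>M) \<partial>M)"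
    by (rule step_S) (unfold g2_def, measurable)
  have "(\<integral>\<^sup>+\<omega>. ennreal (min (Fp (Ys \<omega>) (Cs \<omega>)) (Yd \<omega>)) \<partial>M)
     = (\<integral>\<^sup>+\<omega>'. (\<integral>\<^sup>+\<omega>. ennreal (min (Fp (Ys \<omega>') (Cs \<omega>')) (Yd \<omega>)) \<partial>M) \<partial>M)"
    using 1 by (simp add: g_def)
  also have "\<dots> = (\<integral>\<^sup>+\<omega>'. (\<integral>\<^sup>+\<omega>''. (\<integral>\<^sup>+\<omega>. ennreal (min (Fp (Ys \<omega>') (Cs \<omega>'')) (Yd \<omega>)) \<partial>M) \<partial>M) \<partial>M)"
    using 2 by (simp add: g2_def)
  also have "\<dots> = (\<integral>\<^sup>+t. (\<integral>\<^sup>+\<omega>''. (\<integral>\<^sup>+\<omega>. ennreal (min (Fp t (Cs \<omega>'')) (Yd \<omega>)) \<partial>M) \<partial>M) \<partial>distr M borel Ys)"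
    by (subst nn_integral_distr) auto
  finally show ?thesis .
qed

lemma min_step1: "(\<integral>\<^sup>+\<omega>. ennreal (min (Fp (Ys \<omega>) (Cs \<omega>)) (Yd \<omega>)) \<partial>M)
     = (\<integral>\<^sup>+\<omega>'. (\<integral>\<^sup>+\<omega>. ennreal (min (Fp (Ys \<omega>') (Cs \<omega>')) (Yd \<omega>)) \<partial>M) \<partial>M)"
proof -
  define g where "g w d = ennreal (min (Fp (w IYs) (restrict w IB)) (d IYd))" for w d
  have 1: "(\<integral>\<^sup>+\<omega>. g (RW \<omega>) (RD \<omega>) \<partial>M) = (\<integral>\<^sup>+\<omega>'. (\<integral>\<^sup>+\<omega>. g (RW \<omega>') (RD \<omega>) \<partial>M) \<partial>M)"
    by (rule step_W) (unfold g_def, measurable)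
  then show ?thesis by (simp add: g_def)
qed

lemma Xr_split: "(\<integral>\<^sup>+\<omega>. ennreal (Xr C Ys Yd \<omega>) \<partial>M)
      = (\<integral>\<^sup>+\<omega>. ennreal (Ys \<omega>) \<partial>M) + (\<integral>\<^sup>+\<omega>. ennreal (min (Fp (Ys \<omega>) (Cs \<omega>)) (Yd \<omega>)) \<partial>M)"
proof -
  have "(\<integral>\<^sup>+\<omega>. ennreal (Xr C Ys Yd \<omega>) \<partial>M)
      = (\<integral>\<^sup>+\<omega>. ennreal (Ys \<omega>) + ennreal (min (Fp (Ys \<omega>) (Cs \<omega>)) (Yd \<omega>)) \<partial>M)"
  proof (intro nn_integral_cong_AE)
    show "AE \<omega> in M. ennreal (Xr C Ys Yd \<omega>) = ennreal (Ys \<omega>) + ennreal (min (Fp (Ys \<omega>) (Cs \<omega>)) (Yd \<omega>))"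
      using good_AE'
    proof eventually_elim
      case (elim \<omega>)
      then have "0 \<le> Ys \<omega>" "0 \<le> min (Fp (Ys \<omega>) (Cs \<omega>)) (Yd \<omega>)"
        using Fp_nonneg[OF elim, of "Ys \<omega>"] by (auto simp: good_def)
      then show ?case unfolding Xr_eq by (simp add: ennreal_plus)
    qed
  qed
  also have "\<dots> = (\<integral>\<^sup>+\<omega>. ennreal (Ys \<omega>) \<partial>M) + (\<integral>\<^sup>+\<omega>. ennreal (min (Fp (Ys \<omega>) (Cs \<omega>)) (Yd \<omega>)) \<partial>M)"
    by (rule nn_integral_add) measurable
  finally show ?thesis .
qed

lemma claim3: "(\<integral>\<^sup>+\<omega>. ennreal (Xr C Ys Yd \<omega>) \<partial>M)
        = (\<integral>\<^sup>+\<omega>. ennreal (Ys \<omega>) \<partial>M)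
          + (\<integral>\<^sup>+t. (\<integral>\<^sup>+y\<in>{0..}.
                ennreal (measure M {\<omega>\<in>space M. y < Dsum C (Bbar C t \<omega>) \<omega> - t} * surv M Yd y)
              \<partial>lborel) \<partial>(distr M borel Ys))"
proof -
  have "(\<integral>\<^sup>+\<omega>. ennreal (Xr C Ys Yd \<omega>) \<partial>M)
      = (\<integral>\<^sup>+\<omega>. ennreal (Ys \<omega>) + ennreal (min (Fp (Ys \<omega>) (Cs \<omega>)) (Yd \<omega>)) \<partial>M)"
  proof (intro nn_integral_cong_AE)
    show "AE \<omega> in M. ennreal (Xr C Ys Yd \<omega>) = ennreal (Ys \<omega>) + ennreal (min (Fp (Ys \<omega>) (Cs \<omega>)) (Yd \<omega>))"
      using good_AE'
    proof eventually_elim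
      case (elim \<omega>)
      then have "0 \<le> Ys \<omega>" "0 \<le> min (Fp (Ys \<omega>) (Cs \<omega>)) (Yd \<omega>)"
        using Fp_nonneg[OF elim, of "Ys \<omega>"] by (auto simp: good_def)
      then show ?case unfolding Xr_eq by (simp add: ennreal_plus)
    qed
  qed
  also have "\<dots> = (\<integral>\<^sup>+\<omega>. ennreal (Ys \<omega>) \<partial>M) + (\<integral>\<^sup>+\<omega>. ennreal (min (Fp (Ys \<omega>) (Cs \<omega>)) (Yd \<omega>)) \<partial>M)"
    by (rule nn_integral_add) measurable
  also have "(\<integral>\<^sup>+\<omega>. ennreal (min (Fp (Ys \<omega>) (Cs \<omega>)) (Yd \<omega>)) \<partial>M)
      = (\<integral>\<^sup>+t. (\<integral>\<^sup>+y\<in>{0..}.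
                ennreal (measure M {\<omega>\<in>space M. y < Dsum C (Bbar C t \<omega>) \<omega> - t} * surv M Yd y)
              \<partial>lborel) \<partial>(distr M borel Ys))"
    unfolding min_part Fp_eq Psi_eq ..
  finally show ?thesis .
qed

end


lemma abs_le_sq: "\<bar>y::real\<bar> \<le> 1 + y\<^sup>2"
proof -
  have "0 \<le> (\<bar>y\<bar> - 1)\<^sup>2" by simp
  then have "0 \<le> \<bar>y\<bar> * \<bar>y\<bar> - 2 * \<bar>y\<bar> + 1" by (simp add: power2_eq_square algebra_simps)
  moreover have "\<bar>y\<bar> * \<bar>y\<bar> = y\<^sup>2" by (simp add: power2_eq_square abs_mult_self_eq)
  ultimately show ?thesis by (smt (verit) abs_ge_zero)
qed

lemma exp_deriv: "0 < l \<Longrightarrow> DERIV (\<lambda>x. - exp (- x * l) / l) x :> exp (- x * (l::real))"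
  by (rule derivative_eq_intros refl | simp)+

context setting begin

lemma Ys_int: "integrable M Ys"
  by (rule Bochner_Integration.integrable_bound[where f="\<lambda>\<omega>. 1 + (Ys \<omega>)\<^sup>2"])
     (auto intro: mom_Ys abs_le_sq order_trans[OF _ abs_ge_self])

context
  fixes l :: real
  assumes l: "0 < l" and expo: "distributed M lborel Yd (exponential_density l)"
begin

interpretation LM: pair_sigma_finite lborel M
  by (rule pair_sigma_finite.intro) (rule lborel.sigma_finite_measure_axioms, rule sigma_finite_measure_axioms)

lemma surv_exp: "0 \<le> y \<Longrightarrow> surv M Yd y = exp (- y * l)"
  unfolding surv_def using exponential_distributedD_gt[OF expo _ l] by simp

lemma cdf_exp: "0 \<le> a \<Longrightarrow> prob {\<omega>\<in>space M. Yd \<omega> \<le> a} = 1 - exp (- a * l)"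
  using exponential_distributedD_le[OF expo _ l] by simp

lemma Emin: assumes a: "0 \<le> a"
  shows "(\<integral>\<^sup>+\<omega>. ennreal (min a (Yd \<omega>)) \<partial>M) = ennreal ((1 - exp (- a * l)) / l)"
proof -
  have "(\<integral>\<^sup>+\<omega>. ennreal (min a (Yd \<omega>)) \<partial>M) = (\<integral>\<^sup>+\<omega>. (\<integral>\<^sup>+y. kk y a (Yd \<omega>) \<partial>lborel) \<partial>M)"
    by (simp add: kk_int)
  also have "\<dots> = (\<integral>\<^sup>+y. (\<integral>\<^sup>+\<omega>. kk y a (Yd \<omega>) \<partial>M) \<partial>lborel)"
    by (rule LM.Fubini') measurable
  also have "\<dots> = (\<integral>\<^sup>+y. ennreal (exp (- y * l)) * indicator {0..a} y \<partial>lborel)"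
  proof (rule nn_integral_cong_AE)
    show "AE y in lborel. (\<integral>\<^sup>+\<omega>. kk y a (Yd \<omega>) \<partial>M) = ennreal (exp (- y * l)) * indicator {0..a} y"
      using AE_lborel_singleton[of a]
    proof eventually_elim
      case (elim y)
      show ?case
      proof (cases "0 \<le> y \<and> y < a")
        case True
        have "(\<integral>\<^sup>+\<omega>. kk y a (Yd \<omega>) \<partial>M) = (\<integral>\<^sup>+\<omega>. indicator {\<omega>\<in>space M. y < Yd \<omega>} \<omega> \<partial>M)"
          using True by (intro nn_integral_cong) (auto simp: kk_def indicator_def)
        also have "\<dots> = ennreal (surv M Yd y)"
          by (subst nn_integral_indicator) (auto simp: surv_def emeasure_eq_measure)
        finally show ?thesis using True surv_exp[of y] by simp
      next
        case False
        then have "kk y a b = 0" for b by (auto simp: kk_def)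
        then show ?thesis using False elim by (auto simp: indicator_def)
      qed
    qed
  qed
  also have "\<dots> = ennreal ((- exp (- a * l) / l) - (- exp (- 0 * l) / l))"
    by (rule nn_integral_FTC_Icc[where F="\<lambda>x. - exp (- x * l) / l"]) (use a l exp_deriv in auto)
  also have "(- exp (- a * l) / l) - (- exp (- 0 * l) / l) = (1 - exp (- a * l)) / l"
    using l by (simp add: field_simps)
  finally show ?thesis .
qed

lemma Pd_nn: "ennreal (Pd M C Ys Yd) = (\<integral>\<^sup>+\<omega>'. ennreal (1 - exp (- Fp (Ys \<omega>') (Cs \<omega>') * l)) \<partial>M)"
proof -
  define g where "g w d = (if d IYd \<le> Fp (w IYs) (restrict w IB) then 1 else 0 :: ennreal)" for w d
  have A: "{\<omega>\<in>space M. Zd Ys Yd \<omega> \<le> Vs C Ys \<omega>} = {\<omega>\<in>space M. Yd \<omega> \<le> Fp (Ys \<omega>) (Cs \<omega>)}"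
    by (auto simp: Zd_def Vs_eq)
  have "ennreal (Pd M C Ys Yd) = emeasure M {\<omega>\<in>space M. Yd \<omega> \<le> Fp (Ys \<omega>) (Cs \<omega>)}"
    unfolding Pd_def A by (simp add: emeasure_eq_measure)
  also have "\<dots> = (\<integral>\<^sup>+\<omega>. indicator {\<omega>\<in>space M. Yd \<omega> \<le> Fp (Ys \<omega>) (Cs \<omega>)} \<omega> \<partial>M)"
    by (rule nn_integral_indicator[symmetric]) measurable
  also have "\<dots> = (\<integral>\<^sup>+\<omega>. g (RW \<omega>) (RD \<omega>) \<partial>M)"
    by (intro nn_integral_cong) (auto simp: g_def indicator_def)
  also have "\<dots> = (\<integral>\<^sup>+\<omega>'. (\<integral>\<^sup>+\<omega>. g (RW \<omega>') (RD \<omega>) \<partial>M) \<partial>M)"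
    by (rule step_W) (unfold g_def, measurable)
  also have "\<dots> = (\<integral>\<^sup>+\<omega>'. ennreal (1 - exp (- Fp (Ys \<omega>') (Cs \<omega>') * l)) \<partial>M)"
  proof (intro nn_integral_cong_AE)
    show "AE \<omega>' in M. (\<integral>\<^sup>+\<omega>. g (RW \<omega>') (RD \<omega>) \<partial>M) = ennreal (1 - exp (- Fp (Ys \<omega>') (Cs \<omega>') * l))"
      using good_AE'
    proof eventually_elim
      case (elim \<omega>')
      have "(\<integral>\<^sup>+\<omega>. g (RW \<omega>') (RD \<omega>) \<partial>M) = (\<integral>\<^sup>+\<omega>. indicator {\<omega>\<in>space M. Yd \<omega> \<le> Fp (Ys \<omega>') (Cs \<omega>')} \<omega> \<partial>M)"
        by (intro nn_integral_cong) (auto simp: g_def indicator_def)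
      also have "\<dots> = ennreal (prob {\<omega>\<in>space M. Yd \<omega> \<le> Fp (Ys \<omega>') (Cs \<omega>')})"
        by (subst nn_integral_indicator) (auto simp: emeasure_eq_measure)
      also have "\<dots> = ennreal (1 - exp (- Fp (Ys \<omega>') (Cs \<omega>') * l))"
        using cdf_exp[OF Fp_nonneg[OF elim]] by simp
      finally show ?case .
    qed
  qed
  finally show ?thesis .
qed

lemma Emin_total: "(\<integral>\<^sup>+\<omega>. ennreal (min (Fp (Ys \<omega>) (Cs \<omega>)) (Yd \<omega>)) \<partial>M) = ennreal (Pd M C Ys Yd / l)"
proof -
  have "(\<integral>\<^sup>+\<omega>. ennreal (min (Fp (Ys \<omega>) (Cs \<omega>)) (Yd \<omega>)) \<partial>M)
     = (\<integral>\<^sup>+\<omega>'. (\<integral>\<^sup>+\<omega>. ennreal (min (Fp (Ys \<omega>') (Cs \<omega>')) (Yd \<omega>)) \<partial>M) \<partial>M)"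
    by (rule min_step1)
  also have "\<dots> = (\<integral>\<^sup>+\<omega>'. ennreal (1 - exp (- Fp (Ys \<omega>') (Cs \<omega>') * l)) * ennreal (1 / l) \<partial>M)"
  proof (intro nn_integral_cong_AE)
    show "AE \<omega>' in M. (\<integral>\<^sup>+\<omega>. ennreal (min (Fp (Ys \<omega>') (Cs \<omega>')) (Yd \<omega>)) \<partial>M) = ennreal (1 - exp (- Fp (Ys \<omega>') (Cs \<omega>') * l)) * ennreal (1 / l)"
      using good_AE'
    proof eventually_elim
      case (elim \<omega>')
      show ?case unfolding Emin[OF Fp_nonneg[OF elim]] using l
        by (simp add: ennreal_mult''[symmetric] divide_inverse)
    qed
  qed
  also have "\<dots> = (\<integral>\<^sup>+\<omega>'. ennreal (1 - exp (- Fp (Ys \<omega>') (Cs \<omega>') * l)) \<partial>M) * ennreal (1 / l)"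
    by (rule nn_integral_multc) measurable
  also have "\<dots> = ennreal (Pd M C Ys Yd / l)"
    unfolding Pd_nn[symmetric] using l by (simp add: ennreal_mult''[symmetric] divide_inverse)
  finally show ?thesis .
qed

lemma EXr: "(\<integral>\<omega>. Xr C Ys Yd \<omega> \<partial>M) = (\<integral>\<omega>. Ys \<omega> \<partial>M) + Pd M C Ys Yd / l"
proof -
  have nn: "AE \<omega> in M. 0 \<le> Xr C Ys Yd \<omega>"
    using good_AE'
  proof eventually_elim
    case (elim \<omega>)
    then show ?case unfolding Xr_eq using Fp_nonneg[OF elim, of "Ys \<omega>"] by (auto simp: good_def)
  qed
  have EY: "0 \<le> (\<integral>\<omega>. Ys \<omega> \<partial>M)"
    using Ys_pos by (intro integral_nonneg_AE) (auto elim: eventually_mono)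
  have P: "0 \<le> Pd M C Ys Yd / l" using l by (simp add: Pd_def)
  have "(\<integral>\<omega>. Xr C Ys Yd \<omega> \<partial>M) = enn2real (\<integral>\<^sup>+\<omega>. ennreal (Xr C Ys Yd \<omega>) \<partial>M)"
  proof (rule integral_eq_nn_integral[OF _ nn])
    have "Xr C Ys Yd = (\<lambda>\<omega>. Ys \<omega> + min (Fp (Ys \<omega>) (Cs \<omega>)) (Yd \<omega>))"
      by (rule ext) (rule Xr_eq)
    then show "Xr C Ys Yd \<in> borel_measurable M" by simp
  qed
  also have "\<dots> = enn2real (ennreal (\<integral>\<omega>. Ys \<omega> \<partial>M) + ennreal (Pd M C Ys Yd / l))"
    unfolding Xr_split Emin_total
    using Ys_pos by (subst nn_integral_eq_integral) (auto intro: Ys_int elim: eventually_mono)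
  also have "\<dots> = (\<integral>\<omega>. Ys \<omega> \<partial>M) + Pd M C Ys Yd / l"
    using EY P by (simp flip: ennreal_plus)
  finally show ?thesis .
qed

end
end


definition rr :: "real \<Rightarrow> real \<Rightarrow> real \<Rightarrow> real" where
  "rr l x t = indicator {0..x} t * exp (- l * (x - t))"

lemma rr_nonneg: "0 \<le> rr l x t" by (simp add: rr_def)
lemma rr_le1: "0 \<le> l \<Longrightarrow> rr l x t \<le> 1" by (auto simp: rr_def indicator_def)

lemma rr_meas0: "(\<lambda>p. rr l (fst p) (snd p)) \<in> borel_measurable (borel \<Otimes>\<^sub>M borel)"
proof -
  have "(\<lambda>p. rr l (fst p) (snd p)) = (\<lambda>p. (if 0 \<le> snd p \<and> snd p \<le> fst p then 1 else 0) * exp (- l * (fst p - snd p)))"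
    by (auto simp: rr_def indicator_def fun_eq_iff)
  also have "\<dots> \<in> borel_measurable (borel \<Otimes>\<^sub>M borel)" by measurable
  finally show ?thesis .
qed

lemma rr_meas[measurable (raw)]:
  "f \<in> borel_measurable N \<Longrightarrow> g \<in> borel_measurable N \<Longrightarrow> (\<lambda>x. rr l (f x) (g x)) \<in> borel_measurable N"
  using measurable_compose[OF measurable_Pair[of f N borel g] rr_meas0] by simp

context setting begin

definition qq :: "real \<Rightarrow> nat \<Rightarrow> 'a \<Rightarrow> real" where
  "qq l k \<omega> = (if Ys \<omega> \<le> Dsum C k \<omega> then exp (- l * (Dsum C k \<omega> - Ys \<omega>)) else 0)"

definition aa :: "real \<Rightarrow> nat \<Rightarrow> real" where
  "aa l k = (\<integral>\<omega>. exp (- l * Dsum C k \<omega>) *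
                     (\<integral>t. indicator {0..Dsum C k \<omega>} t * exp (l * t) \<partial>(distr M borel Ys)) \<partial>M)"

lemma qq_meas[measurable]: "qq l k \<in> borel_measurable M"
  unfolding qq_def by measurable

lemma qq_nonneg: "0 \<le> qq l k \<omega>" by (simp add: qq_def)
lemma qq_le1: "0 \<le> l \<Longrightarrow> qq l k \<omega> \<le> 1" by (simp add: qq_def mult_nonneg_nonneg)

lemma qq_int: "0 \<le> l \<Longrightarrow> integrable M (qq l k)"
  by (rule integrable_const_bound[where B=1]) (auto simp: qq_nonneg qq_le1)

lemma inner_eq: "exp (- l * x) * (\<integral>t. indicator {0..x} t * exp (l * t) \<partial>(distr M borel Ys))
   = enn2real (\<integral>\<^sup>+\<omega>'. ennreal (rr l x (Ys \<omega>')) \<partial>M)"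
proof -
  have "exp (- l * x) * (\<integral>t. indicator {0..x} t * exp (l * t) \<partial>(distr M borel Ys))
      = (\<integral>t. exp (- l * x) * (indicator {0..x} t * exp (l * t)) \<partial>(distr M borel Ys))"
    by simp
  also have "\<dots> = (\<integral>t. rr l x t \<partial>(distr M borel Ys))"
    by (intro Bochner_Integration.integral_cong) (auto simp: rr_def indicator_def simp flip: exp_add intro!: arg_cong[where f=exp] simp: algebra_simps)
  also have "\<dots> = (\<integral>\<omega>'. rr l x (Ys \<omega>') \<partial>M)"
    by (subst integral_distr) (auto intro: rr_meas)
  also have "\<dots> = enn2real (\<integral>\<^sup>+\<omega>'. ennreal (rr l x (Ys \<omega>')) \<partial>M)"
    by (rule integral_eq_nn_integral) (auto simp: rr_nonneg)
  finally show ?thesis .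
qed

lemma rr_fin: "0 \<le> l \<Longrightarrow> (\<integral>\<^sup>+\<omega>'. ennreal (rr l x (Ys \<omega>')) \<partial>M) < top"
proof -
  assume l: "0 \<le> l"
  have "(\<integral>\<^sup>+\<omega>'. ennreal (rr l x (Ys \<omega>')) \<partial>M) \<le> (\<integral>\<^sup>+\<omega>. 1 \<partial>M)"
    by (intro nn_integral_mono) (simp add: rr_le1[OF l])
  also have "\<dots> = 1" by (simp add: emeasure_space_1)
  finally show ?thesis by (simp add: le_less_trans)
qed

lemma aa_eq: assumes l: "0 \<le> l" shows "aa l k = (\<integral>\<omega>. qq l k \<omega> \<partial>M)"
proof -
  have "aa l k = (\<integral>\<omega>. enn2real (\<integral>\<^sup>+\<omega>'. ennreal (rr l (Dsum C k \<omega>) (Ys \<omega>')) \<partial>M) \<partial>M)"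
    unfolding aa_def inner_eq ..
  also have "\<dots> = enn2real (\<integral>\<^sup>+\<omega>. ennreal (enn2real (\<integral>\<^sup>+\<omega>'. ennreal (rr l (Dsum C k \<omega>) (Ys \<omega>')) \<partial>M)) \<partial>M)"
    by (rule integral_eq_nn_integral) auto
  also have "\<dots> = enn2real (\<integral>\<^sup>+\<omega>. (\<integral>\<^sup>+\<omega>'. ennreal (rr l (Dsum C k \<omega>) (Ys \<omega>')) \<partial>M) \<partial>M)"
    by (simp add: rr_fin[OF l])
  also have "(\<integral>\<^sup>+\<omega>. (\<integral>\<^sup>+\<omega>'. ennreal (rr l (Dsum C k \<omega>) (Ys \<omega>')) \<partial>M) \<partial>M)
      = (\<integral>\<^sup>+\<omega>. ennreal (rr l (Dsum C k \<omega>) (Ys \<omega>)) \<partial>M)"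
  proof -
    define h where "h a c = ennreal (rr l (Dp c k) (a IYs))" for a c
    have "(\<integral>\<^sup>+\<omega>. h (RS \<omega>) (Cs \<omega>) \<partial>M) = (\<integral>\<^sup>+\<omega>. (\<integral>\<^sup>+\<omega>'. h (RS \<omega>') (Cs \<omega>) \<partial>M) \<partial>M)"
      by (rule cond_M2[OF I1]) (unfold h_def, measurable)
    then show ?thesis by (simp add: h_def Dsum_eq)
  qed
  also have "(\<integral>\<^sup>+\<omega>. ennreal (rr l (Dsum C k \<omega>) (Ys \<omega>)) \<partial>M) = (\<integral>\<^sup>+\<omega>. ennreal (qq l k \<omega>) \<partial>M)"
    by (intro nn_integral_cong_AE)
       (use Ys_pos in \<open>auto elim!: eventually_mono simp: rr_def qq_def indicator_def\<close>)
  also have "enn2real \<dots> = (\<integral>\<omega>. qq l k \<omega> \<partial>M)"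
    by (rule integral_eq_nn_integral[symmetric]) (auto simp: qq_nonneg)
  finally show ?thesis .
qed

end


context setting begin

definition qq' :: "real \<Rightarrow> nat \<Rightarrow> 'a \<Rightarrow> real" where
  "qq' l k \<omega> = (if Bbar C (Ys \<omega>) \<omega> = k then exp (- l * (Dsum C k \<omega> - Ys \<omega>)) else 0)"

lemma qq'_meas[measurable]: "qq' l k \<in> borel_measurable M"
proof -
  have "qq' l k = (\<lambda>\<omega>. if Bp (Ys \<omega>) (Cs \<omega>) = k then exp (- l * (Dp (Cs \<omega>) k - Ys \<omega>)) else 0)"
    by (auto simp: qq'_def Bbar_eq Dsum_eq fun_eq_iff)
  also have "\<dots> \<in> borel_measurable M"
  proof -
    have [measurable]: "(\<lambda>\<omega>. Bp (Ys \<omega>) (Cs \<omega>)) \<in> measurable M (count_space UNIV)"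
      using measurable_compose[OF measurable_Pair[OF Ys_meas Cs_meas] meas_Bp] by simp
    show ?thesis by measurable
  qed
  finally show ?thesis .
qed

lemma qq'_nonneg: "0 \<le> qq' l k \<omega>" by (simp add: qq'_def)

lemma rec_pt: assumes g: "good \<omega>"
  shows "qq l (Suc j) \<omega> = exp (- l * C (Suc j) \<omega>) * qq l j \<omega> + qq' l (Suc j) \<omega>"
proof -
  have pos: "\<forall>i\<ge>1. 0 < C i \<omega>" and unb: "\<forall>t. \<exists>n. t \<le> Dsum C n \<omega>" and t: "0 < Ys \<omega>"
    using g by (auto simp: good_def)
  have B: "Bbar C (Ys \<omega>) \<omega> = Suc j \<longleftrightarrow> Dsum C j \<omega> < Ys \<omega> \<and> Ys \<omega> \<le> Dsum C (Suc j) \<omega>"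
    using Bbar_eq_iff[OF pos unb t, of "Suc j"] by simp
  have D: "Dsum C (Suc j) \<omega> = Dsum C j \<omega> + C (Suc j) \<omega>" by (rule Dsum_Suc)
  have c: "0 < C (Suc j) \<omega>" using pos by auto
  show ?thesis
  proof (cases "Ys \<omega> \<le> Dsum C j \<omega>")
    case True
    then show ?thesis using B D c
      by (auto simp: qq_def qq'_def simp flip: exp_add intro!: arg_cong[where f=exp] simp: algebra_simps)
  next
    case False
    then show ?thesis using B D by (auto simp: qq_def qq'_def)
  qed
qed

lemma indep_step: "indep_var borel (\<lambda>\<omega>. exp (- l * C (Suc j) \<omega>)) borel (qq l j)"
proof -
  let ?A = "{IC (Suc j)}" and ?B = "insert IYs (IC ` {1..j})"
  have ind0: "indep_var (PiM ?A (\<lambda>_. borel)) (\<lambda>\<omega>. restrict (\<lambda>i. XX i \<omega>) ?A)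
                  (PiM ?B (\<lambda>_. borel)) (\<lambda>\<omega>. restrict (\<lambda>i. XX i \<omega>) ?B)"
    by (rule indep_var_restrict[OF indep']) (auto simp: IB_def)
  define f1 where "f1 h = exp (- l * h (IC (Suc j)))" for h :: "idx \<Rightarrow> real"
  define f2 where "f2 h = (if h IYs \<le> (\<Sum>i\<in>{1..j}. h (IC i)) then exp (- l * ((\<Sum>i\<in>{1..j}. h (IC i)) - h IYs)) else 0)" for h :: "idx \<Rightarrow> real"
  have m1: "f1 \<in> borel_measurable (PiM ?A (\<lambda>_. borel))"
  proof -
    have [measurable]: "(\<lambda>h. h (IC (Suc j))) \<in> borel_measurable (PiM ?A (\<lambda>_. borel))"
      by (rule measurable_component_singleton) auto
    show ?thesis unfolding f1_def by measurable
  qed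
  have m2: "f2 \<in> borel_measurable (PiM ?B (\<lambda>_. borel))"
  proof -
    have [measurable]: "(\<lambda>h. h IYs) \<in> borel_measurable (PiM ?B (\<lambda>_. borel))"
      by (rule measurable_component_singleton) auto
    have [measurable]: "(\<lambda>h::idx \<Rightarrow> real. \<Sum>i\<in>{1..j}. h (IC i)) \<in> borel_measurable (PiM ?B (\<lambda>_. borel))"
      by (rule borel_measurable_sum[of "{1..j}" "\<lambda>i h. h (IC i)"], rule measurable_component_singleton) auto
    show ?thesis unfolding f2_def by measurable
  qed
  have "indep_var borel (f1 \<circ> (\<lambda>\<omega>. restrict (\<lambda>i. XX i \<omega>) ?A)) borel (f2 \<circ> (\<lambda>\<omega>. restrict (\<lambda>i. XX i \<omega>) ?B))"
    by (rule indep_var_compose[OF ind0 m1 m2])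
  moreover have "f1 \<circ> (\<lambda>\<omega>. restrict (\<lambda>i. XX i \<omega>) ?A) = (\<lambda>\<omega>. exp (- l * C (Suc j) \<omega>))"
    by (auto simp: f1_def famRV_def)
  moreover have "f2 \<circ> (\<lambda>\<omega>. restrict (\<lambda>i. XX i \<omega>) ?B) = qq l j"
  proof -
    have "(\<Sum>i\<in>{1..j}. restrict (\<lambda>i. XX i \<omega>) ?B (IC i)) = Dsum C j \<omega>" for \<omega>
      by (auto simp: Dsum_def famRV_def intro!: sum.cong)
    then show ?thesis by (auto simp: f2_def qq_def famRV_def fun_eq_iff)
  qed
  ultimately show ?thesis by simp
qed

lemma rec_int: assumes l: "0 \<le> l"
  shows "(\<integral>\<omega>. qq l (Suc j) \<omega> \<partial>M) = Lap M C0 l * (\<integral>\<omega>. qq l j \<omega> \<partial>M) + (\<integral>\<omega>. qq' l (Suc j) \<omega> \<partial>M)"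
proof -
  have [measurable]: "C (Suc j) \<in> borel_measurable M" by (rule C_meas) simp
  have i1: "integrable M (\<lambda>\<omega>. exp (- l * C (Suc j) \<omega>))" by (rule int_expC) (use l in auto)
  have i2: "integrable M (qq l j)" by (rule qq_int[OF l])
  have i3: "integrable M (\<lambda>\<omega>. exp (- l * C (Suc j) \<omega>) * qq l j \<omega>)"
    by (rule indep_var_integrable[OF indep_step i1 i2])
  have i4: "integrable M (qq' l (Suc j))"
  proof (rule integrable_const_bound[where B=1])
    show "AE \<omega> in M. norm (qq' l (Suc j) \<omega>) \<le> 1"
      using good_AE'
    proof eventually_elim
      case (elim \<omega>)
      then have "Bbar C (Ys \<omega>) \<omega> = Suc j \<Longrightarrow> Ys \<omega> \<le> Dsum C (Suc j) \<omega>"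
        using Bbar_le[of C \<omega> "Ys \<omega>"] by (auto simp: good_def)
      then show ?case using l by (auto simp: qq'_def mult_nonneg_nonneg)
    qed
  qed simp
  have "(\<integral>\<omega>. qq l (Suc j) \<omega> \<partial>M) = (\<integral>\<omega>. exp (- l * C (Suc j) \<omega>) * qq l j \<omega> + qq' l (Suc j) \<omega> \<partial>M)"
    by (intro integral_cong_AE) (use good_AE' rec_pt in \<open>auto elim!: eventually_mono\<close>)
  also have "\<dots> = (\<integral>\<omega>. exp (- l * C (Suc j) \<omega>) * qq l j \<omega> \<partial>M) + (\<integral>\<omega>. qq' l (Suc j) \<omega> \<partial>M)"
    by (rule Bochner_Integration.integral_add[OF i3 i4])
  also have "(\<integral>\<omega>. exp (- l * C (Suc j) \<omega>) * qq l j \<omega> \<partial>M) = Lap M C0 l * (\<integral>\<omega>. qq l j \<omega> \<partial>M)"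
    using indep_var_lebesgue_integral[OF indep_step i1 i2] Lap_eq[of "Suc j" l] by simp
  finally show ?thesis .
qed

end


lemma rec_real:
  fixes a b :: "nat \<Rightarrow> real"
  assumes L: "0 \<le> L" "L < 1" and a: "\<And>j. 0 \<le> a j" and b: "\<And>j. 0 \<le> b j" and a0: "a 0 = 0"
    and rec: "\<And>j. a (Suc j) = L * a j + b j" and bs: "b sums B"
  shows "summable (\<lambda>j. a (Suc j))" and "B = (1 - L) * (\<Sum>j. a (Suc j))"
proof -
  have bound: "(\<Sum>j<n. a (Suc j)) \<le> B / (1 - L)" for n
  proof -
    let ?T = "\<Sum>j<n. a (Suc j)"
    have "(\<Sum>j<n. a j) \<le> (\<Sum>j<Suc n. a j)"
      using a by (simp add: sum.lessThan_Suc)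
    also have "\<dots> = ?T" by (subst sum.lessThan_Suc_shift) (simp add: a0)
    finally have s1: "(\<Sum>j<n. a j) \<le> ?T" .
    have s2: "(\<Sum>j<n. b j) \<le> B"
      using sum_le_suminf[OF sums_summable[OF bs], of "{..<n}"] b sums_unique[OF bs] by auto
    have "?T = L * (\<Sum>j<n. a j) + (\<Sum>j<n. b j)"
      by (simp add: rec sum.distrib sum_distrib_left)
    also have "\<dots> \<le> L * ?T + B"
      using s1 s2 L by (intro add_mono mult_left_mono) auto
    finally have "(1 - L) * ?T \<le> B" by (simp add: algebra_simps)
    then show ?thesis using L by (simp add: field_simps)
  qed
  show sa: "summable (\<lambda>j. a (Suc j))"
    by (rule summableI_nonneg_bounded[OF _ bound]) (use a in auto)
  define S where "S = (\<Sum>j. a (Suc j))"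
  have "(\<lambda>j. a (Suc j)) sums S" using sa by (simp add: S_def summable_sums)
  then have as: "a sums S" using sums_Suc_iff[of a S] a0 by simp
  have "(\<lambda>j. L * a j + b j) sums (L * S + B)"
    by (intro sums_add sums_mult as bs)
  then have "(\<lambda>j. a (Suc j)) sums (L * S + B)" by (simp add: rec)
  with \<open>(\<lambda>j. a (Suc j)) sums S\<close> have "S = L * S + B" by (rule sums_unique2)
  then show "B = (1 - L) * (\<Sum>j. a (Suc j))" unfolding S_def[symmetric] by (simp add: algebra_simps)
qed


context setting begin

lemma qq'_int: assumes l: "0 \<le> l" shows "integrable M (qq' l k)"
proof (rule integrable_const_bound[where B=1])
  show "AE \<omega> in M. norm (qq' l k \<omega>) \<le> 1"
    using good_AE'
  proof eventually_elim
    case (elim \<omega>)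
    then have "Bbar C (Ys \<omega>) \<omega> = k \<Longrightarrow> Ys \<omega> \<le> Dsum C k \<omega>"
      using Bbar_le[of C \<omega> "Ys \<omega>"] by (auto simp: good_def)
    then show ?case using l by (auto simp: qq'_def mult_nonneg_nonneg)
  qed
qed simp

lemma qq'_sum_pt: assumes g: "good \<omega>"
  shows "(\<Sum>j. ennreal (qq' l (Suc j) \<omega>)) = ennreal (exp (- l * Fp (Ys \<omega>) (Cs \<omega>)))"
proof -
  have pos: "\<forall>i\<ge>1. 0 < C i \<omega>" and unb: "\<forall>t. \<exists>n. t \<le> Dsum C n \<omega>"
    using g by (auto simp: good_def)
  define K where "K = Bbar C (Ys \<omega>) \<omega>"
  have K1: "1 \<le> K" unfolding K_def by (rule Bbar_ge1[OF pos unb])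
  have "(\<Sum>j. ennreal (qq' l (Suc j) \<omega>)) = (\<Sum>j\<in>{K - 1}. ennreal (qq' l (Suc j) \<omega>))"
    by (rule suminf_finite) (use K1 in \<open>auto simp: qq'_def K_def[symmetric]\<close>)
  also have "\<dots> = ennreal (qq' l K \<omega>)" using K1 by simp
  also have "\<dots> = ennreal (exp (- l * Fp (Ys \<omega>) (Cs \<omega>)))"
    unfolding qq'_def K_def Fp_eq[symmetric] by simp
  finally show ?thesis .
qed

lemma emeas_F_Yd: "emeasure M {\<omega>\<in>space M. Fp (Ys \<omega>) (Cs \<omega>) < Yd \<omega>}
   = (\<integral>\<^sup>+\<omega>'. ennreal (surv M Yd (Fp (Ys \<omega>') (Cs \<omega>'))) \<partial>M)"
proof -
  define g where "g w d = (if Fp (w IYs) (restrict w IB) < d IYd then 1 else 0 :: ennreal)" for w d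
  have "emeasure M {\<omega>\<in>space M. Fp (Ys \<omega>) (Cs \<omega>) < Yd \<omega>} = (\<integral>\<^sup>+\<omega>. indicator {\<omega>\<in>space M. Fp (Ys \<omega>) (Cs \<omega>) < Yd \<omega>} \<omega> \<partial>M)"
    by (rule nn_integral_indicator[symmetric]) measurable
  also have "\<dots> = (\<integral>\<^sup>+\<omega>. g (RW \<omega>) (RD \<omega>) \<partial>M)"
    by (intro nn_integral_cong) (auto simp: g_def indicator_def)
  also have "\<dots> = (\<integral>\<^sup>+\<omega>'. (\<integral>\<^sup>+\<omega>. g (RW \<omega>') (RD \<omega>) \<partial>M) \<partial>M)"
    by (rule step_W) (unfold g_def, measurable)
  also have "\<dots> = (\<integral>\<^sup>+\<omega>'. ennreal (surv M Yd (Fp (Ys \<omega>') (Cs \<omega>'))) \<partial>M)"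
  proof (intro nn_integral_cong)
    fix \<omega>' assume "\<omega>' \<in> space M"
    have "(\<integral>\<^sup>+\<omega>. g (RW \<omega>') (RD \<omega>) \<partial>M) = (\<integral>\<^sup>+\<omega>. indicator {\<omega>\<in>space M. Fp (Ys \<omega>') (Cs \<omega>') < Yd \<omega>} \<omega> \<partial>M)"
      by (intro nn_integral_cong) (auto simp: g_def indicator_def)
    also have "\<dots> = ennreal (surv M Yd (Fp (Ys \<omega>') (Cs \<omega>')))"
      by (subst nn_integral_indicator) (auto simp: surv_def emeasure_eq_measure)
    finally show "(\<integral>\<^sup>+\<omega>. g (RW \<omega>') (RD \<omega>) \<partial>M) = ennreal (surv M Yd (Fp (Ys \<omega>') (Cs \<omega>')))" .
  qed
  finally show ?thesis .
qed

lemma Pd_le1: "Pd M C Ys Yd \<le> 1" by (simp add: Pd_def)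

lemma b_sum:
  assumes l: "0 < l" and expo: "distributed M lborel Yd (exponential_density l)"
  shows "(\<lambda>j. \<integral>\<omega>. qq' l (Suc j) \<omega> \<partial>M) sums (1 - Pd M C Ys Yd)"
proof -
  have ints: "(\<integral>\<^sup>+\<omega>. ennreal (qq' l (Suc j) \<omega>) \<partial>M) = ennreal (\<integral>\<omega>. qq' l (Suc j) \<omega> \<partial>M)" for j
    by (rule nn_integral_eq_integral) (use qq'_int l in \<open>auto simp: qq'_nonneg\<close>)
  have "(\<Sum>j. ennreal (\<integral>\<omega>. qq' l (Suc j) \<omega> \<partial>M)) = (\<Sum>j. \<integral>\<^sup>+\<omega>. ennreal (qq' l (Suc j) \<omega>) \<partial>M)"
    by (simp add: ints)
  also have "\<dots> = (\<integral>\<^sup>+\<omega>. (\<Sum>j. ennreal (qq' l (Suc j) \<omega>)) \<partial>M)"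
    by (rule nn_integral_suminf[symmetric]) measurable
  also have "\<dots> = (\<integral>\<^sup>+\<omega>'. ennreal (surv M Yd (Fp (Ys \<omega>') (Cs \<omega>'))) \<partial>M)"
  proof (intro nn_integral_cong_AE)
    show "AE \<omega> in M. (\<Sum>j. ennreal (qq' l (Suc j) \<omega>)) = ennreal (surv M Yd (Fp (Ys \<omega>) (Cs \<omega>)))"
      using good_AE'
    proof eventually_elim
      case (elim \<omega>)
      show ?case unfolding qq'_sum_pt[OF elim] surv_exp[OF l expo Fp_nonneg[OF elim]]
        by (simp add: mult.commute)
    qed
  qed
  also have "\<dots> = emeasure M {\<omega>\<in>space M. Fp (Ys \<omega>) (Cs \<omega>) < Yd \<omega>}"
    by (rule emeas_F_Yd[symmetric])
  also have "\<dots> = ennreal (1 - Pd M C Ys Yd)"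
    by (simp add: compl_Pd emeasure_eq_measure)
  finally have E: "(\<Sum>j. ennreal (\<integral>\<omega>. qq' l (Suc j) \<omega> \<partial>M)) = ennreal (1 - Pd M C Ys Yd)" .
  have nn: "0 \<le> (\<integral>\<omega>. qq' l (Suc j) \<omega> \<partial>M)" for j
    by (rule integral_nonneg_AE) (simp add: qq'_nonneg)
  have sm: "summable (\<lambda>j. \<integral>\<omega>. qq' l (Suc j) \<omega> \<partial>M)"
    by (rule summable_suminf_not_top) (use nn E in auto)
  have "ennreal (\<Sum>j. \<integral>\<omega>. qq' l (Suc j) \<omega> \<partial>M) = ennreal (1 - Pd M C Ys Yd)"
    using suminf_ennreal2[OF nn sm] E by simp
  then have "(\<Sum>j. \<integral>\<omega>. qq' l (Suc j) \<omega> \<partial>M) = 1 - Pd M C Ys Yd"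
    using Pd_le1 suminf_nonneg[OF sm nn] by (subst (asm) ennreal_inj) auto
  then show ?thesis using summable_sums[OF sm] by metis
qed

lemma claim4a:
  assumes l: "0 < l" and expo: "distributed M lborel Yd (exponential_density l)"
  shows "summable (\<lambda>k. aa l (Suc k))
     \<and> 1 - Pd M C Ys Yd = (1 - Lap M C0 l) * (\<Sum>k. aa l (Suc k)) - Lap M C0 l * measure (distr M borel Ys) {0}"
proof -
  have l0: "0 \<le> l" using l by simp
  have a_nn: "0 \<le> aa l j" for j
    unfolding aa_eq[OF l0] by (rule integral_nonneg_AE) (simp add: qq_nonneg)
  have a0: "aa l 0 = 0"
  proof -
    have "(\<integral>\<omega>. qq l 0 \<omega> \<partial>M) = (\<integral>\<omega>. 0 \<partial>M)"
      by (intro integral_cong_AE) (use Ys_pos in \<open>auto elim!: eventually_mono simp: qq_def\<close>)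
    then show ?thesis unfolding aa_eq[OF l0] by simp
  qed
  have rec: "aa l (Suc j) = Lap M C0 l * aa l j + (\<integral>\<omega>. qq' l (Suc j) \<omega> \<partial>M)" for j
    unfolding aa_eq[OF l0] by (rule rec_int[OF l0])
  have b_nn: "0 \<le> (\<integral>\<omega>. qq' l (Suc j) \<omega> \<partial>M)" for j
    by (rule integral_nonneg_AE) (simp add: qq'_nonneg)
  note R = rec_real[OF Lap_ge0 Lap_lt1[OF l] a_nn b_nn a0 rec b_sum[OF l expo]]
  have z: "measure (distr M borel Ys) {0} = 0"
  proof -
    have "measure (distr M borel Ys) {0} = prob {\<omega>\<in>space M. Ys \<omega> = 0}"
      by (subst measure_distr) (auto intro!: arg_cong[where f=prob])
    also have "\<dots> = 0"
      by (rule prob_eq_0_AE) (use Ys_pos in \<open>auto elim!: eventually_mono\<close>)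
    finally show ?thesis .
  qed
  show ?thesis using R z by simp
qed

end

theorem mainTheorem1:
  fixes M :: "'a measure" and Ys Yd C0 :: "'a \<Rightarrow> real" and C :: "nat \<Rightarrow> 'a \<Rightarrow> real"
  assumes P: "prob_space M"
    and Ys_pos: "AE \<omega> in M. 0 < Ys \<omega>"
    and Yd_pos: "AE \<omega> in M. 0 < Yd \<omega>"
    and C0_rv: "C0 \<in> borel_measurable M"
    and C0_pos: "measure M {\<omega>\<in>space M. 0 < C0 \<omega>} = 1"
    and iid: "\<And>i. 1 \<le> i \<Longrightarrow> distr M borel (C i) = distr M borel C0"
    and indep: "prob_space.indep_vars M (\<lambda>_. borel) (famRV Ys Yd C)
                  ({IYs, IYd} \<union> {IC i | i. 1 \<le> i})"
    and mom_Ys: "integrable M (\<lambda>\<omega>. (Ys \<omega>)\<^sup>2)"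
    and mom_C: "integrable M (\<lambda>\<omega>. (C0 \<omega>)\<^sup>2)"
  shows
    "(\<integral>\<^sup>+\<omega>. ennreal (real (Kr C Ys \<omega>)) \<partial>M)
        = (\<Sum>n. \<integral>\<^sup>+\<omega>. ennreal (surv M Ys (Dsum C n \<omega>)) \<partial>M)
     \<and> 1 - Pd M C Ys Yd
        = (\<integral>t. (\<integral>\<omega>. surv M Yd (Dsum C (Bbar C t \<omega>) \<omega> - t) \<partial>M) \<partial>(distr M borel Ys))
     \<and> (\<integral>\<^sup>+\<omega>. ennreal (Xr C Ys Yd \<omega>) \<partial>M)
        = (\<integral>\<^sup>+\<omega>. ennreal (Ys \<omega>) \<partial>M)
          + (\<integral>\<^sup>+t. (\<integral>\<^sup>+y\<in>{0..}.
                ennreal (measure M {\<omega>\<in>space M. y < Dsum C (Bbar C t \<omega>) \<omega> - t} * surv M Yd y)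
              \<partial>lborel) \<partial>(distr M borel Ys))
     \<and> (\<forall>l>0. distributed M lborel Yd (exponential_density l) \<longrightarrow>
          (let S = (\<lambda>k. \<integral>\<omega>. exp (- l * Dsum C (Suc k) \<omega>) *
                     (\<integral>t. indicator {0..Dsum C (Suc k) \<omega>} t * exp (l * t) \<partial>(distr M borel Ys)) \<partial>M)
           in summable S
              \<and> 1 - Pd M C Ys Yd
                  = (1 - Lap M C0 l) * (\<Sum>k. S k) - Lap M C0 l * measure (distr M borel Ys) {0})
          \<and> (\<integral>\<omega>. Xr C Ys Yd \<omega> \<partial>M) = (\<integral>\<omega>. Ys \<omega> \<partial>M) + Pd M C Ys Yd / l)"
proof -
  interpret setting M Ys Yd C0 C
    by (intro setting.intro setting_axioms.intro) (use assms in auto)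
  show ?thesis
    apply (intro conjI allI impI)
    subgoal by (rule claim1)
    subgoal by (rule claim2)
    subgoal by (rule claim3)
    subgoal for l unfolding Let_def using claim4a[of l] by (simp add: aa_def)
    subgoal for l by (rule EXr)
    done
qed

end
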